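(* There is an $\mathcal{O}(k^2)$-time PILLAR algorithm that, given a string $X\in\Sigma^n$ and an integer $k\in\mathbb{Z}_{\ge0}$, determines whether $\mathrm{selfed}(X)\le k$ and, if so, retrieves the breakpoint representation of an optimal self-alignment of $X$.
   Context: An alignment of $X$ onto $X$ is a sequence $(x_t,y_t)_{t=0}^m$ from $(0,0)$ to $(|X|,|X|)$ with steps $(1,0)$ (deletion of $X[x_t]$), $(0,1)$ (insertion of $X[y_t]$), $(1,1)$ (aligning $X[x_t]$ to $X[y_t]$; a match if equal, otherwise a substitution). Its unweighted cost is the number of insertions, deletions and substitutions. A self-alignment is such an alignment that never aligns a character $X[x]$ to itself, i.e., contains no step $(x,x)\to(x+1,x+1)$; $\mathrm{selfed}(X)$ is the minimum unweighted cost of a self-alignment, and an optimal self-alignment is one attaining it. The breakpoint representation of an alignment is the subsequence of pairs $(x_t,y_t)$ with $t\in\{0,m\}$ or such that the step from $t$ is not a match. PILLAR model: unit-cost operations Extract, LCP, LCP$^R$, Access, Length on fragments of the input string. *)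

theory Defs
  imports Main
begin

definition is_alignment :: "nat \<Rightarrow> (nat \<times> nat) list \<Rightarrow> bool" where
  "is_alignment n A \<longleftrightarrow> A \<noteq> [] \<and> hd A = (0,0) \<and> last A = (n,n) \<and>
     (\<forall>t < length A - 1.
        (fst (A!(Suc t)) = Suc (fst (A!t)) \<and> snd (A!(Suc t)) = snd (A!t)) \<or>
        (fst (A!(Suc t)) = fst (A!t) \<and> snd (A!(Suc t)) = Suc (snd (A!t))) \<or>
        (fst (A!(Suc t)) = Suc (fst (A!t)) \<and> snd (A!(Suc t)) = Suc (snd (A!t))))"

definition diag_step :: "(nat \<times> nat) list \<Rightarrow> nat \<Rightarrow> bool" where
  "diag_step A t \<longleftrightarrow> fst (A!(Suc t)) = Suc (fst (A!t)) \<and> snd (A!(Suc t)) = Suc (snd (A!t))"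

definition match_step :: "'a list \<Rightarrow> (nat \<times> nat) list \<Rightarrow> nat \<Rightarrow> bool" where
  "match_step X A t \<longleftrightarrow> diag_step A t \<and> X ! fst (A!t) = X ! snd (A!t)"

definition align_cost :: "'a list \<Rightarrow> (nat \<times> nat) list \<Rightarrow> nat" where
  "align_cost X A = card {t. t < length A - 1 \<and> \<not> match_step X A t}"

definition self_alignment :: "'a list \<Rightarrow> (nat \<times> nat) list \<Rightarrow> bool" where
  "self_alignment X A \<longleftrightarrow> is_alignment (length X) A \<and>
     (\<forall>t < length A - 1. diag_step A t \<longrightarrow> fst (A!t) \<noteq> snd (A!t))"

definition selfed :: "'a list \<Rightarrow> nat" where
  "selfed X = (LEAST c. \<exists>A. self_alignment X A \<and> align_cost X A = c)"

definition optimal_self_alignment :: "'a list \<Rightarrow> (nat \<times> nat) list \<Rightarrow> bool" where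
  "optimal_self_alignment X A \<longleftrightarrow> self_alignment X A \<and> align_cost X A = selfed X"

definition breakpoints :: "'a list \<Rightarrow> (nat \<times> nat) list \<Rightarrow> (nat \<times> nat) list" where
  "breakpoints X A =
     map (\<lambda>t. A ! t) (filter (\<lambda>t. t = 0 \<or> t = length A - 1 \<or> \<not> match_step X A t) [0..<length A])"

section \<open>Word RAM with PILLAR oracle access to a single input string X\<close>

fun lcp_len :: "'a list \<Rightarrow> 'a list \<Rightarrow> nat" where
  "lcp_len (a # as) (b # bs) = (if a = b then Suc (lcp_len as bs) else 0)"
| "lcp_len _ _ = 0"

definition frag :: "'a list \<Rightarrow> nat \<Rightarrow> nat \<Rightarrow> 'a list" where
  "frag X a b = drop a (take b X)"

text \<open>Fragments of X are represented by index pairs (a,b) standing for X[a..b), so Extract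
  amounts to index arithmetic.  PAccess d i: reg d := X[i]; PLength d: reg d := |X|;
  PLCP d a b c e: reg d := LCP(X[a..b), X[c..e)); PLCPR likewise for the longest common suffix.
  Each executed instruction costs one unit of time.\<close>
datatype instr =
    LoadConst nat nat
  | Add nat nat nat
  | Sub nat nat nat
  | Mul nat nat nat
  | Div nat nat nat
  | Load nat nat
  | Store nat nat
  | Jmp nat
  | JmpLess nat nat nat
  | Out nat
  | Halt
  | PAccess nat nat
  | PLength nat
  | PLCP nat nat nat nat nat
  | PLCPR nat nat nat nat nat

datatype config = Config (pc: nat) (regs: "nat \<Rightarrow> nat") (mem: "nat \<Rightarrow> nat") (outp: "nat list")

definition halted :: "instr list \<Rightarrow> config \<Rightarrow> bool" where
  "halted P c \<longleftrightarrow> length P \<le> pc c \<or> P ! pc c = Halt"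

fun exec_instr :: "nat \<Rightarrow> nat list \<Rightarrow> instr \<Rightarrow> config \<Rightarrow> config" where
  "exec_instr w X (LoadConst d v) (Config p r m ou) = Config (Suc p) (r(d := v mod 2^w)) m ou"
| "exec_instr w X (Add d a b) (Config p r m ou) = Config (Suc p) (r(d := (r a + r b) mod 2^w)) m ou"
| "exec_instr w X (Sub d a b) (Config p r m ou) = Config (Suc p) (r(d := (r a + 2^w - r b) mod 2^w)) m ou"
| "exec_instr w X (Mul d a b) (Config p r m ou) = Config (Suc p) (r(d := (r a * r b) mod 2^w)) m ou"
| "exec_instr w X (Div d a b) (Config p r m ou) = Config (Suc p) (r(d := r a div r b)) m ou"
| "exec_instr w X (Load d a) (Config p r m ou) = Config (Suc p) (r(d := m (r a))) m ou"
| "exec_instr w X (Store a s) (Config p r m ou) = Config (Suc p) r (m(r a := r s)) ou"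
| "exec_instr w X (Jmp t) (Config p r m ou) = Config t r m ou"
| "exec_instr w X (JmpLess a b t) (Config p r m ou) =
     Config (if r a < r b then t else Suc p) r m ou"
| "exec_instr w X (Out s) (Config p r m ou) = Config (Suc p) r m (ou @ [r s])"
| "exec_instr w X Halt c = c"
| "exec_instr w X (PAccess d i) (Config p r m ou) =
     Config (Suc p) (r(d := (if r i < length X then X ! r i else 0))) m ou"
| "exec_instr w X (PLength d) (Config p r m ou) = Config (Suc p) (r(d := length X)) m ou"
| "exec_instr w X (PLCP d a b c e) (Config p r m ou) =
     Config (Suc p) (r(d := lcp_len (frag X (r a) (r b)) (frag X (r c) (r e)))) m ou"
| "exec_instr w X (PLCPR d a b c e) (Config p r m ou) =
     Config (Suc p) (r(d := lcp_len (rev (frag X (r a) (r b))) (rev (frag X (r c) (r e))))) m ou"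

definition step :: "instr list \<Rightarrow> nat \<Rightarrow> nat list \<Rightarrow> config \<Rightarrow> config" where
  "step P w X c = (if halted P c then c else exec_instr w X (P ! pc c) c)"

definition init_config :: "nat \<Rightarrow> config" where
  "init_config k = Config 0 ((\<lambda>_. 0)(0 := k)) (\<lambda>_. 0) []"

definition run :: "instr list \<Rightarrow> nat \<Rightarrow> nat list \<Rightarrow> nat \<Rightarrow> nat \<Rightarrow> config" where
  "run P w X k t = (step P w X ^^ t) (init_config k)"

definition encode_points :: "(nat \<times> nat) list \<Rightarrow> nat list" where
  "encode_points ps = concat (map (\<lambda>(x,y). [x, y]) ps)"

end

theory Submission
  imports Defs
begin


definition prog :: "instr list" where
"prog = [
 Jmp 117, Halt, Halt, Halt, Halt, Halt,
 Add 11 7 3, Load 12 11, JmpLess 1 12 47, JmpLess 5 0 12, Out 20, Halt,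
 Add 8 7 20, Add 7 7 4, Add 5 5 2, Add 6 2 20,
 Add 11 8 6, Load 10 11, JmpLess 6 3 21, JmpLess 3 6 21, Jmp 23,
 JmpLess 10 2 23, Add 10 10 2,
 Add 12 11 2, Load 12 12, JmpLess 12 2 29, Add 12 12 2, JmpLess 12 10 29, Add 10 12 20,
 Sub 12 11 2, Load 12 12, JmpLess 12 10 33, Add 10 12 20,
 JmpLess 10 2 42, JmpLess 6 3 37, JmpLess 3 6 37, Jmp 42,
 Sub 12 10 2, Add 13 12 6, Sub 13 13 3, PLCP 13 12 1 13 1, Add 10 10 13,
 Add 11 7 6, Store 11 10, Add 6 6 2, JmpLess 6 14 16, Jmp 6,
 Add 15 1 20, Add 16 1 20, Add 17 5 20, Mul 19 3 4, Add 18 19 20,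
 JmpLess 20 15 55, JmpLess 20 16 55, Jmp 104,
 JmpLess 15 16 58, JmpLess 16 15 58, Jmp 61,
 PLCPR 21 20 15 20 16, Sub 15 15 21, Sub 16 16 21,
 Sub 22 17 2, Mul 22 22 4,
 JmpLess 20 15 65, Jmp 72,
 Sub 23 15 2, Add 24 16 20, Add 25 24 3, Sub 25 25 23, Add 25 25 22, Load 25 25, JmpLess 23 25 96,
 JmpLess 20 16 74, Jmp 81,
 Add 23 15 20, Sub 24 16 2, Add 25 24 3, Sub 25 25 23, Add 25 25 22, Load 25 25, JmpLess 23 25 96,
 JmpLess 20 15 83, Jmp 104, JmpLess 20 16 85, Jmp 104, JmpLess 15 16 88, JmpLess 16 15 88, Jmp 104,
 Sub 23 15 2, Sub 24 16 2, Add 25 24 3, Sub 25 25 23, Add 25 25 22, Load 25 25, JmpLess 23 25 96, Jmp 104,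
 Store 18 23, Add 18 18 2, Store 18 24, Add 18 18 2, Add 15 23 20, Add 16 24 20, Sub 17 17 2, Jmp 52,
 Out 2,
 JmpLess 19 18 109, Out 1, Out 1, Halt,
 Sub 18 18 2, Sub 18 18 2, Load 25 18, Out 25, Add 26 18 2, Load 25 26, Out 25, Jmp 105,
 PLength 1, LoadConst 2 1, Add 3 0 2, Add 14 3 3, Add 4 14 2, Store 3 2, Jmp 6]"

lemma prog_len[simp]: "length prog = 124" by (simp add: prog_def)

lemma prog_nth[simp]:
  "prog ! 0 = Jmp 117"
  "prog ! 1 = Halt"
  "prog ! 2 = Halt"
  "prog ! 3 = Halt"
  "prog ! 4 = Halt"
  "prog ! 5 = Halt"
  "prog ! 6 = Add 11 7 3"
  "prog ! 7 = Load 12 11"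
  "prog ! 8 = JmpLess 1 12 47"
  "prog ! 9 = JmpLess 5 0 12"
  "prog ! 10 = Out 20"
  "prog ! 11 = Halt"
  "prog ! 12 = Add 8 7 20"
  "prog ! 13 = Add 7 7 4"
  "prog ! 14 = Add 5 5 2"
  "prog ! 15 = Add 6 2 20"
  "prog ! 16 = Add 11 8 6"
  "prog ! 17 = Load 10 11"
  "prog ! 18 = JmpLess 6 3 21"
  "prog ! 19 = JmpLess 3 6 21"
  "prog ! 20 = Jmp 23"
  "prog ! 21 = JmpLess 10 2 23"
  "prog ! 22 = Add 10 10 2"
  "prog ! 23 = Add 12 11 2"
  "prog ! 24 = Load 12 12"
  "prog ! 25 = JmpLess 12 2 29"
  "prog ! 26 = Add 12 12 2"
  "prog ! 27 = JmpLess 12 10 29"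
  "prog ! 28 = Add 10 12 20"
  "prog ! 29 = Sub 12 11 2"
  "prog ! 30 = Load 12 12"
  "prog ! 31 = JmpLess 12 10 33"
  "prog ! 32 = Add 10 12 20"
  "prog ! 33 = JmpLess 10 2 42"
  "prog ! 34 = JmpLess 6 3 37"
  "prog ! 35 = JmpLess 3 6 37"
  "prog ! 36 = Jmp 42"
  "prog ! 37 = Sub 12 10 2"
  "prog ! 38 = Add 13 12 6"
  "prog ! 39 = Sub 13 13 3"
  "prog ! 40 = PLCP 13 12 1 13 1"
  "prog ! 41 = Add 10 10 13"
  "prog ! 42 = Add 11 7 6"
  "prog ! 43 = Store 11 10"
  "prog ! 44 = Add 6 6 2"
  "prog ! 45 = JmpLess 6 14 16"
  "prog ! 46 = Jmp 6"
  "prog ! 47 = Add 15 1 20"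
  "prog ! 48 = Add 16 1 20"
  "prog ! 49 = Add 17 5 20"
  "prog ! 50 = Mul 19 3 4"
  "prog ! 51 = Add 18 19 20"
  "prog ! 52 = JmpLess 20 15 55"
  "prog ! 53 = JmpLess 20 16 55"
  "prog ! 54 = Jmp 104"
  "prog ! 55 = JmpLess 15 16 58"
  "prog ! 56 = JmpLess 16 15 58"
  "prog ! 57 = Jmp 61"
  "prog ! 58 = PLCPR 21 20 15 20 16"
  "prog ! 59 = Sub 15 15 21"
  "prog ! 60 = Sub 16 16 21"
  "prog ! 61 = Sub 22 17 2"
  "prog ! 62 = Mul 22 22 4"
  "prog ! 63 = JmpLess 20 15 65"
  "prog ! 64 = Jmp 72"
  "prog ! 65 = Sub 23 15 2"
  "prog ! 66 = Add 24 16 20"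
  "prog ! 67 = Add 25 24 3"
  "prog ! 68 = Sub 25 25 23"
  "prog ! 69 = Add 25 25 22"
  "prog ! 70 = Load 25 25"
  "prog ! 71 = JmpLess 23 25 96"
  "prog ! 72 = JmpLess 20 16 74"
  "prog ! 73 = Jmp 81"
  "prog ! 74 = Add 23 15 20"
  "prog ! 75 = Sub 24 16 2"
  "prog ! 76 = Add 25 24 3"
  "prog ! 77 = Sub 25 25 23"
  "prog ! 78 = Add 25 25 22"
  "prog ! 79 = Load 25 25"
  "prog ! 80 = JmpLess 23 25 96"
  "prog ! 81 = JmpLess 20 15 83"
  "prog ! 82 = Jmp 104"
  "prog ! 83 = JmpLess 20 16 85"
  "prog ! 84 = Jmp 104"
  "prog ! 85 = JmpLess 15 16 88"
  "prog ! 86 = JmpLess 16 15 88"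
  "prog ! 87 = Jmp 104"
  "prog ! 88 = Sub 23 15 2"
  "prog ! 89 = Sub 24 16 2"
  "prog ! 90 = Add 25 24 3"
  "prog ! 91 = Sub 25 25 23"
  "prog ! 92 = Add 25 25 22"
  "prog ! 93 = Load 25 25"
  "prog ! 94 = JmpLess 23 25 96"
  "prog ! 95 = Jmp 104"
  "prog ! 96 = Store 18 23"
  "prog ! 97 = Add 18 18 2"
  "prog ! 98 = Store 18 24"
  "prog ! 99 = Add 18 18 2"
  "prog ! 100 = Add 15 23 20"
  "prog ! 101 = Add 16 24 20"
  "prog ! 102 = Sub 17 17 2"
  "prog ! 103 = Jmp 52"
  "prog ! 104 = Out 2"
  "prog ! 105 = JmpLess 19 18 109"
  "prog ! 106 = Out 1"
  "prog ! 107 = Out 1"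
  "prog ! 108 = Halt"
  "prog ! 109 = Sub 18 18 2"
  "prog ! 110 = Sub 18 18 2"
  "prog ! 111 = Load 25 18"
  "prog ! 112 = Out 25"
  "prog ! 113 = Add 26 18 2"
  "prog ! 114 = Load 25 26"
  "prog ! 115 = Out 25"
  "prog ! 116 = Jmp 105"
  "prog ! 117 = PLength 1"
  "prog ! 118 = LoadConst 2 1"
  "prog ! 119 = Add 3 0 2"
  "prog ! 120 = Add 14 3 3"
  "prog ! 121 = Add 4 14 2"
  "prog ! 122 = Store 3 2"
  "prog ! 123 = Jmp 6"
  by (simp_all add: prog_def)


section \<open>lcp facts\<close>

lemma lcp_len_le: "lcp_len xs ys \<le> length xs \<and> lcp_len xs ys \<le> length ys"
  by (induction xs ys rule: lcp_len.induct) auto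

lemma lcp_len_eq: "i < lcp_len xs ys \<Longrightarrow> xs ! i = ys ! i"
proof (induction xs ys arbitrary: i rule: lcp_len.induct)
  case (1 a as b bs)
  then show ?case by (cases i) (auto split: if_splits)
qed auto

lemma lcp_len_max: "lcp_len xs ys < length xs \<Longrightarrow> lcp_len xs ys < length ys \<Longrightarrow>
   xs ! lcp_len xs ys \<noteq> ys ! lcp_len xs ys"
  by (induction xs ys rule: lcp_len.induct) auto

lemma lcp_drop:
  assumes "l = lcp_len (drop a X) (drop b X)"
  shows "a + l \<le> length X \<or> l = 0" "b + l \<le> length X \<or> l = 0"
    "\<And>i. i < l \<Longrightarrow> a + i < length X \<and> b + i < length X \<and> X ! (a + i) = X ! (b + i)"
    "a + l < length X \<Longrightarrow> b + l < length X \<Longrightarrow> X ! (a + l) \<noteq> X ! (b + l)"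
proof -
  have le: "l \<le> length (drop a X)" "l \<le> length (drop b X)" using lcp_len_le[of "drop a X" "drop b X"] assms by auto
  show "a + l \<le> length X \<or> l = 0" "b + l \<le> length X \<or> l = 0" using le by auto
  show "\<And>i. i < l \<Longrightarrow> a + i < length X \<and> b + i < length X \<and> X ! (a + i) = X ! (b + i)"
  proof -
    fix i assume "i < l"
    then have "drop a X ! i = drop b X ! i" using lcp_len_eq assms by blast
    moreover have "a + i < length X" "b + i < length X" using le \<open>i < l\<close> by auto
    ultimately show "a + i < length X \<and> b + i < length X \<and> X ! (a + i) = X ! (b + i)"
      by (simp add: add.commute)
  qed
  show "a + l < length X \<Longrightarrow> b + l < length X \<Longrightarrow> X ! (a + l) \<noteq> X ! (b + l)"
    using lcp_len_max[of "drop a X" "drop b X"] assms by (simp add: add.commute)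
qed

section \<open>Reachability\<close>

inductive R :: "nat list \<Rightarrow> nat \<times> nat \<Rightarrow> nat \<Rightarrow> bool" for X where
  R0: "R X (0,0) 0"
| Rw: "R X p c \<Longrightarrow> R X p (Suc c)"
| Rdel: "R X (x,y) c \<Longrightarrow> R X (Suc x, y) (Suc c)"
| Rins: "R X (x,y) c \<Longrightarrow> R X (x, Suc y) (Suc c)"
| Rsub: "R X (x,y) c \<Longrightarrow> x \<noteq> y \<Longrightarrow> R X (Suc x, Suc y) (Suc c)"
| Rmat: "R X (x,y) c \<Longrightarrow> x \<noteq> y \<Longrightarrow> x < length X \<Longrightarrow> y < length X \<Longrightarrow> X!x = X!y \<Longrightarrow> R X (Suc x, Suc y) c"

lemma R_dist: "R X p c \<Longrightarrow> fst p \<le> snd p + c \<and> snd p \<le> fst p + c"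
  by (induction rule: R.induct) auto

lemma R_zero: "R X p c \<Longrightarrow> c = 0 \<Longrightarrow> p = (0,0)"
  by (induction rule: R.induct) auto

lemma R_mono: "R X p c \<Longrightarrow> c \<le> c' \<Longrightarrow> R X p c'"
proof (induction c' )
  case 0 then show ?case by simp
next
  case (Suc c') then show ?case by (cases "c = Suc c'") (auto intro: Rw)
qed

lemma R_0y: "R X (0, y) y"
  by (induction y) (auto intro: R0 Rins)

lemma R_x0: "R X (x, 0) x"
  by (induction x) (auto intro: R0 Rdel)

lemma R_back0: "R X q c \<Longrightarrow> q = (Suc x, Suc y) \<Longrightarrow> R X (x, y) c"
proof (induction arbitrary: x y rule: R.induct)
  case R0 then show ?case by simp
next
  case (Rw p c) then show ?case by (auto intro: R.Rw)
next
  case (Rdel x0 y0 c)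
  then have e: "x0 = x" "y0 = Suc y" by auto
  show ?case
  proof (cases x)
    case 0
    have "Suc y \<le> c" using R_dist[OF Rdel.hyps] e 0 by simp
    then show ?thesis using R_mono[OF R_0y[of X y], of "Suc c"] 0 by simp
  next
    case (Suc x')
    then have "R X (x', y) c" using Rdel.IH e by simp
    then show ?thesis using Suc by (auto intro: R.Rdel)
  qed
next
  case (Rins x0 y0 c)
  then have e: "x0 = Suc x" "y0 = y" by auto
  show ?case
  proof (cases y)
    case 0
    have "Suc x \<le> c" using R_dist[OF Rins.hyps] e 0 by simp
    then show ?thesis using R_mono[OF R_x0[of X x], of "Suc c"] 0 by simp
  next
    case (Suc y')
    then have "R X (x, y') c" using Rins.IH e by simp
    then show ?thesis using Suc by (auto intro: R.Rins)
  qed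
next
  case (Rsub x0 y0 c) then show ?case by (auto intro: R.Rw)
next
  case (Rmat x0 y0 c) then show ?case by auto
qed

lemma R_back: "R X (x + i, y + i) c \<Longrightarrow> R X (x, y) c"
  by (induction i) (auto dest: R_back0)

section \<open>The table\<close>

definition slide :: "nat list \<Rightarrow> nat \<Rightarrow> nat \<Rightarrow> nat \<Rightarrow> nat" where
  "slide X K1 j v = (if 0 < v \<and> j \<noteq> K1 then v + lcp_len (drop (v-1) X) (drop (v-1+j-K1) X) else v)"

definition candv :: "nat \<Rightarrow> nat \<Rightarrow> nat \<Rightarrow> nat \<Rightarrow> nat \<Rightarrow> nat" where
  "candv K1 j s s1 s0 = max (max (if j \<noteq> K1 \<and> 0 < s then Suc s else s) (if 0 < s1 then Suc s1 else 0)) s0"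

fun Tab :: "nat list \<Rightarrow> nat \<Rightarrow> nat \<Rightarrow> nat \<Rightarrow> nat" where
  "Tab X k 0 j = (if j = Suc k then 1 else 0)"
| "Tab X k (Suc e) j = (if 1 \<le> j \<and> j \<le> 2*k+1 then
     slide X (Suc k) j (candv (Suc k) j (Tab X k e j) (Tab X k e (Suc j)) (Tab X k e (j-1))) else 0)"

lemma slide_ge: "v \<le> slide X K1 j v"
  by (simp add: slide_def)

lemma slide_0: "slide X K1 j 0 = 0"
  by (simp add: slide_def)

lemma slide_le: "slide X K1 j v \<le> max v (Suc (length X))"
proof -
  have "lcp_len (drop (v-1) X) (drop (v-1+j-K1) X) \<le> length X - (v - 1)"
    using lcp_len_le[of "drop (v-1) X" "drop (v-1+j-K1) X"] by simp
  then show ?thesis by (auto simp: slide_def)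
qed

lemma Tab_bound: "Tab X k e j \<le> length X + e + 1"
proof (induction e arbitrary: j)
  case 0 then show ?case by simp
next
  case (Suc e)
  define v where "v = candv (Suc k) j (Tab X k e j) (Tab X k e (Suc j)) (Tab X k e (j-1))"
  have "v \<le> length X + Suc e + 1"
    using Suc.IH[of j] Suc.IH[of "Suc j"] Suc.IH[of "j-1"] by (auto simp: candv_def v_def)
  moreover have "slide X (Suc k) j v \<le> max v (Suc (length X))" by (rule slide_le)
  ultimately have "slide X (Suc k) j v \<le> length X + Suc e + 1" by simp
  then show ?case by (simp add: v_def)
qed

lemma Tab_edge: "Tab X k e 0 = 0" "Tab X k e (2*k+2) = 0"
  by (cases e; simp)+

lemma Tab_ge: "1 \<le> j \<Longrightarrow> j \<le> 2*k+1 \<Longrightarrow>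
   candv (Suc k) j (Tab X k e j) (Tab X k e (Suc j)) (Tab X k e (j-1)) \<le> Tab X k (Suc e) j"
  using slide_ge by simp

lemma Tab_ge_stay: "1 \<le> j \<Longrightarrow> j \<le> 2*k+1 \<Longrightarrow> Tab X k e j \<le> Tab X k (Suc e) j"
  by (rule le_trans[OF _ Tab_ge]) (auto simp: candv_def)
lemma Tab_ge_sub: "1 \<le> j \<Longrightarrow> j \<le> 2*k+1 \<Longrightarrow> j \<noteq> Suc k \<Longrightarrow> 0 < Tab X k e j \<Longrightarrow>
   Suc (Tab X k e j) \<le> Tab X k (Suc e) j"
  by (rule le_trans[OF _ Tab_ge]) (auto simp: candv_def)
lemma Tab_ge_del: "1 \<le> j \<Longrightarrow> j \<le> 2*k+1 \<Longrightarrow> 0 < Tab X k e (Suc j) \<Longrightarrow>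
   Suc (Tab X k e (Suc j)) \<le> Tab X k (Suc e) j"
  by (rule le_trans[OF _ Tab_ge]) (auto simp: candv_def)
lemma Tab_ge_ins: "1 \<le> j \<Longrightarrow> j \<le> 2*k+1 \<Longrightarrow> Tab X k e (j - 1) \<le> Tab X k (Suc e) j"
  by (rule le_trans[OF _ Tab_ge]) (auto simp: candv_def)

lemma Tab_Suc: "1 \<le> j \<Longrightarrow> j \<le> 2*k+1 \<Longrightarrow> Tab X k (Suc e) j =
     slide X (Suc k) j (candv (Suc k) j (Tab X k e j) (Tab X k e (Suc j)) (Tab X k e (j-1)))"
  by simp

declare Tab.simps(2)[simp del]

section \<open>Soundness\<close>

abbreviation valid :: "nat \<Rightarrow> nat \<Rightarrow> nat \<Rightarrow> bool" where
  "valid K1 j v \<equiv> K1 \<le> v - 1 + j"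

lemma slide_sound:
  assumes "0 < v" "j \<noteq> K1" "K1 \<le> v - 1 + j" "R X (v - 1, v - 1 + j - K1) e"
  shows "K1 \<le> slide X K1 j v - 1 + j \<and> R X (slide X K1 j v - 1, slide X K1 j v - 1 + j - K1) e"
proof -
  define l where "l = lcp_len (drop (v-1) X) (drop (v-1+j-K1) X)"
  note L = lcp_drop[OF l_def]
  have "\<And>i. i \<le> l \<Longrightarrow> R X (v - 1 + i, v - 1 + j - K1 + i) e"
  proof -
    fix i assume "i \<le> l"
    then show "R X (v - 1 + i, v - 1 + j - K1 + i) e"
    proof (induction i)
      case 0 then show ?case using assms by simp
    next
      case (Suc i)
      then have r: "R X (v - 1 + i, v - 1 + j - K1 + i) e" by simp
      have "i < l" using Suc by simp
      from L(3)[OF this] have m: "v - 1 + i < length X" "v - 1 + j - K1 + i < length X"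
        "X ! (v - 1 + i) = X ! (v - 1 + j - K1 + i)" by auto
      have ne: "v - 1 + i \<noteq> v - 1 + j - K1 + i" using assms(2,3) by auto
      show ?case using Rmat[OF r ne m] by simp
    qed
  qed
  then have "R X (v - 1 + l, v - 1 + j - K1 + l) e" by simp
  moreover have "slide X K1 j v = v + l" using assms by (simp add: slide_def l_def)
  ultimately show ?thesis using assms by (simp add: algebra_simps)
qed

lemma cand_sound:
  assumes IH: "\<And>j. 0 < Tab X k e j \<Longrightarrow> Suc k \<le> Tab X k e j - 1 + j \<and>
        R X (Tab X k e j - 1, Tab X k e j - 1 + j - Suc k) e"
  and j: "1 \<le> j"
  and v: "v = candv (Suc k) j (Tab X k e j) (Tab X k e (Suc j)) (Tab X k e (j-1))" "0 < v"
  shows "Suc k \<le> v - 1 + j \<and> R X (v - 1, v - 1 + j - Suc k) (Suc e)"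
proof -
  define s where "s = Tab X k e j"
  define s1 where "s1 = Tab X k e (Suc j)"
  define s0 where "s0 = Tab X k e (j - 1)"
  define a where "a = (if j \<noteq> Suc k \<and> 0 < s then Suc s else s)"
  define b where "b = (if 0 < s1 then Suc s1 else 0)"
  have vv: "v = max (max a b) s0" using v by (simp add: candv_def a_def b_def s_def s1_def s0_def)
  have A: "0 < a \<Longrightarrow> Suc k \<le> a - 1 + j \<and> R X (a - 1, a - 1 + j - Suc k) (Suc e)"
  proof -
    assume "0 < a"
    then have "0 < s" by (auto simp: a_def split: if_splits)
    from IH[of j] this have h: "Suc k \<le> s - 1 + j" "R X (s - 1, s - 1 + j - Suc k) e" by (auto simp: s_def)
    show ?thesis
    proof (cases "j \<noteq> Suc k")
      case True
      have ne: "s - 1 \<noteq> s - 1 + j - Suc k" using True h(1) by auto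
      have "R X (Suc (s - 1), Suc (s - 1 + j - Suc k)) (Suc e)" by (rule Rsub[OF h(2) ne])
      moreover have "Suc (s - 1) = s" "Suc (s - 1 + j - Suc k) = s + j - Suc k" using \<open>0<s\<close> h(1) by auto
      ultimately show ?thesis using True \<open>0<s\<close> h(1) by (simp add: a_def)
    next
      case False
      then show ?thesis using h Rw[OF h(2)] by (simp add: a_def)
    qed
  qed
  have B: "0 < b \<Longrightarrow> Suc k \<le> b - 1 + j \<and> R X (b - 1, b - 1 + j - Suc k) (Suc e)"
  proof -
    assume "0 < b"
    then have "0 < s1" by (auto simp: b_def split: if_splits)
    from IH[of "Suc j"] this have h: "Suc k \<le> s1 - 1 + Suc j" "R X (s1 - 1, s1 - 1 + Suc j - Suc k) e"
      by (auto simp: s1_def)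
    have "R X (Suc (s1 - 1), s1 - 1 + Suc j - Suc k) (Suc e)" by (rule Rdel[OF h(2)])
    moreover have "Suc (s1 - 1) = s1" "s1 - 1 + Suc j - Suc k = s1 + j - Suc k" using \<open>0<s1\<close> h(1) by auto
    ultimately show ?thesis using \<open>0<s1\<close> h(1) by (simp add: b_def)
  qed
  have C: "0 < s0 \<Longrightarrow> Suc k \<le> s0 - 1 + j \<and> R X (s0 - 1, s0 - 1 + j - Suc k) (Suc e)"
  proof -
    assume "0 < s0"
    from IH[of "j - 1"] this have h: "Suc k \<le> s0 - 1 + (j - 1)" "R X (s0 - 1, s0 - 1 + (j - 1) - Suc k) e"
      by (auto simp: s0_def)
    have "R X (s0 - 1, Suc (s0 - 1 + (j - 1) - Suc k)) (Suc e)" by (rule Rins[OF h(2)])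
    moreover have "Suc (s0 - 1 + (j - 1) - Suc k) = s0 - 1 + j - Suc k" using h(1) j by auto
    ultimately show ?thesis using h(1) j by simp
  qed
  show ?thesis using A B C v(2) unfolding vv by (auto simp: max_def)
qed

lemma Tab_sound: "0 < Tab X k e j \<Longrightarrow> Suc k \<le> Tab X k e j - 1 + j \<and>
   R X (Tab X k e j - 1, Tab X k e j - 1 + j - Suc k) e"
proof (induction e arbitrary: j)
  case 0 then show ?case by (auto split: if_splits intro: R0)
next
  case (Suc e)
  define v where "v = candv (Suc k) j (Tab X k e j) (Tab X k e (Suc j)) (Tab X k e (j-1))"
  have j: "1 \<le> j" "j \<le> 2*k+1" and T: "Tab X k (Suc e) j = slide X (Suc k) j v"
    using Suc.prems by (auto simp: v_def Tab.simps(2) split: if_splits)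
  have "0 < v" using Suc.prems T slide_0 by (metis gr0I)
  from cand_sound[OF Suc.IH j(1) v_def this] have h: "Suc k \<le> v - 1 + j" "R X (v - 1, v - 1 + j - Suc k) (Suc e)"
    by auto
  show ?case
  proof (cases "j = Suc k")
    case True then show ?thesis using h T by (simp add: slide_def)
  next
    case False
    show ?thesis using slide_sound[OF \<open>0<v\<close> False h] T by simp
  qed
qed

section \<open>Completeness\<close>

lemma Tab_complete: "R X p c \<Longrightarrow> c \<le> k \<Longrightarrow> fst p < Tab X k c (snd p + Suc k - fst p)"
proof (induction rule: R.induct)
  case R0 then show ?case by simp
next
  case (Rw p c)
  obtain x y where p: "p = (x,y)" by (cases p)
  have d: "x \<le> y + c" "y \<le> x + c" using R_dist[OF Rw.hyps] p by auto
  define j where "j = y + Suc k - x"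
  have j: "1 \<le> j" "j \<le> 2*k+1" using d Rw.prems by (auto simp: j_def)
  have "x < Tab X k c j" using Rw p by (simp add: j_def)
  also have "Tab X k c j \<le> Tab X k (Suc c) j" using Tab_ge_stay[OF j] .
  finally show ?case using p by (simp only: fst_conv snd_conv j_def[symmetric])
next
  case (Rdel x y c)
  have d: "x \<le> y + c" "y \<le> x + c" using R_dist[OF Rdel.hyps] by auto
  define j where "j = y + Suc k - Suc x"
  have j: "1 \<le> j" "j \<le> 2*k+1" using d Rdel.prems by (auto simp: j_def)
  have jj: "Suc j = y + Suc k - x" using d Rdel.prems by (simp add: j_def)
  have "x < Tab X k c (Suc j)" using Rdel jj by simp
  moreover have "Suc (Tab X k c (Suc j)) \<le> Tab X k (Suc c) j" if "0 < Tab X k c (Suc j)"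
    using Tab_ge_del[OF j that] .
  ultimately have "Suc x < Tab X k (Suc c) j" by fastforce
  then show ?case by (simp only: fst_conv snd_conv j_def[symmetric])
next
  case (Rins x y c)
  have d: "x \<le> y + c" "y \<le> x + c" using R_dist[OF Rins.hyps] by auto
  define j where "j = Suc y + Suc k - x"
  have j: "1 \<le> j" "j \<le> 2*k+1" using d Rins.prems by (auto simp: j_def)
  have jj: "j - 1 = y + Suc k - x" using d Rins.prems by (simp add: j_def)
  have "x < Tab X k c (j - 1)" using Rins jj by simp
  moreover have "Tab X k c (j - 1) \<le> Tab X k (Suc c) j" using Tab_ge_ins[OF j] .
  ultimately have "x < Tab X k (Suc c) j" by linarith
  then show ?case by (simp only: fst_conv snd_conv j_def[symmetric])
next
  case (Rsub x y c)
  have d: "x \<le> y + c" "y \<le> x + c" using R_dist[OF Rsub.hyps(1)] by auto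
  define j where "j = y + Suc k - x"
  have j: "1 \<le> j" "j \<le> 2*k+1" using d Rsub.prems by (auto simp: j_def)
  have jn: "j \<noteq> Suc k" using Rsub.hyps(2) d by (auto simp: j_def)
  have "x < Tab X k c j" using Rsub j_def by simp
  moreover have "Suc (Tab X k c j) \<le> Tab X k (Suc c) j" if "0 < Tab X k c j"
    using Tab_ge_sub[OF j jn that] .
  ultimately have "Suc x < Tab X k (Suc c) j" by fastforce
  have jj: "j = Suc y + Suc k - Suc x" by (simp add: j_def)
  show ?case using \<open>Suc x < Tab X k (Suc c) j\<close> by (simp only: fst_conv snd_conv jj[symmetric])
next
  case (Rmat x y c)
  have d: "x \<le> y + c" "y \<le> x + c" using R_dist[OF Rmat.hyps(1)] by auto
  define j where "j = y + Suc k - x"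
  have jn: "j \<noteq> Suc k" using Rmat.hyps(2) d by (auto simp: j_def)
  have lt: "x < Tab X k c j" using Rmat j_def by simp
  have "c \<noteq> 0" using R_zero[OF Rmat.hyps(1)] Rmat.hyps(2) by auto
  then obtain c' where c: "c = Suc c'" by (cases c) auto
  have j: "1 \<le> j" "j \<le> 2*k+1" using d Rmat.prems c by (auto simp: j_def)
  define v where "v = candv (Suc k) j (Tab X k c' j) (Tab X k c' (Suc j)) (Tab X k c' (j-1))"
  have T: "Tab X k c j = slide X (Suc k) j v" using Tab_Suc[OF j] c by (simp add: v_def)
  have v0: "0 < v" using lt T slide_0 by (metis gr0I not_less0)
  have vs: "Suc k \<le> v - 1 + j"
    using cand_sound[OF Tab_sound j(1) v_def v0] by blast
  define l where "l = lcp_len (drop (v-1) X) (drop (v-1+j-Suc k) X)"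
  have T2: "Tab X k c j = v + l" using T v0 jn by (simp add: slide_def l_def)
  show ?case
  proof (rule ccontr)
    assume "\<not> fst (Suc x, Suc y) < Tab X k c (snd (Suc x, Suc y) + Suc k - fst (Suc x, Suc y))"
    then have "Tab X k c j \<le> Suc x" by (simp add: j_def)
    then have xe: "x = v - 1 + l" using lt T2 v0 by simp
    have ye: "y = v - 1 + j - Suc k + l" using xe vs d Rmat.prems by (simp add: j_def)
    have "X ! (v - 1 + l) \<noteq> X ! (v - 1 + j - Suc k + l)"
      using lcp_drop(4)[OF l_def] Rmat.hyps xe ye by simp
    then show False using Rmat.hyps xe ye by simp
  qed
qed

lemma Tab_iff:
  assumes "c \<le> k" "Suc k \<le> x + j" "j \<le> 2*k+2"
  shows "R X (x, x + j - Suc k) c \<longleftrightarrow> x < Tab X k c j"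
proof
  assume "R X (x, x + j - Suc k) c"
  from Tab_complete[OF this assms(1)] assms show "x < Tab X k c j" by simp
next
  assume a: "x < Tab X k c j"
  then have "0 < Tab X k c j" by simp
  from Tab_sound[OF this] have h: "Suc k \<le> Tab X k c j - 1 + j"
    "R X (Tab X k c j - 1, Tab X k c j - 1 + j - Suc k) c" by auto
  define i where "i = Tab X k c j - 1 - x"
  have "Tab X k c j - 1 = x + i" "Tab X k c j - 1 + j - Suc k = x + j - Suc k + i"
    using a assms h(1) by (auto simp: i_def)
  then show "R X (x, x + j - Suc k) c" using R_back[of X x i "x + j - Suc k" c] h(2) by simp
qed


definition okstep :: "nat \<times> nat \<Rightarrow> nat \<times> nat \<Rightarrow> bool" where
  "okstep p q \<longleftrightarrow> (fst q = Suc (fst p) \<and> snd q = snd p) \<or> (fst q = fst p \<and> snd q = Suc (snd p)) \<or>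
     (fst q = Suc (fst p) \<and> snd q = Suc (snd p) \<and> fst p \<noteq> snd p)"

definition ismatch :: "nat list \<Rightarrow> nat \<times> nat \<Rightarrow> nat \<times> nat \<Rightarrow> bool" where
  "ismatch X p q \<longleftrightarrow> fst q = Suc (fst p) \<and> snd q = Suc (snd p) \<and> X ! fst p = X ! snd p"

fun spath :: "nat list \<Rightarrow> (nat \<times> nat) list \<Rightarrow> bool" where
  "spath X (p # q # r) = (okstep p q \<and> spath X (q # r))"
| "spath X _ = True"

fun scost :: "nat list \<Rightarrow> (nat \<times> nat) list \<Rightarrow> nat" where
  "scost X (p # q # r) = (if ismatch X p q then 0 else 1) + scost X (q # r)"
| "scost X _ = 0"

fun Bpre :: "nat list \<Rightarrow> (nat \<times> nat) list \<Rightarrow> (nat \<times> nat) list" where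
  "Bpre X (p # q # r) = (if ismatch X p q then [] else [p]) @ Bpre X (q # r)"
| "Bpre X _ = []"

lemma spath_idx: "spath X A \<longleftrightarrow> (\<forall>t < length A - 1. okstep (A!t) (A!Suc t))"
proof (induction A rule: spath.induct)
  case (1 X p q r)
  then show ?case by (simp add: All_less_Suc2)
qed auto

lemma step_iff: "((fst b = Suc (fst a) \<and> snd b = snd a) \<or> (fst b = fst a \<and> snd b = Suc (snd a)) \<or>
        (fst b = Suc (fst a) \<and> snd b = Suc (snd a))) \<and>
      ((fst b = Suc (fst a) \<and> snd b = Suc (snd a)) \<longrightarrow> fst a \<noteq> snd a) \<longleftrightarrow> okstep a b"
  by (auto simp: okstep_def)

lemma self_alignment_iff: "self_alignment X A \<longleftrightarrow>
   A \<noteq> [] \<and> hd A = (0,0) \<and> last A = (length X, length X) \<and> spath X A"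
proof -
  have e: "\<And>t. (((fst (A!Suc t) = Suc (fst (A!t)) \<and> snd (A!Suc t) = snd (A!t)) \<or>
      (fst (A!Suc t) = fst (A!t) \<and> snd (A!Suc t) = Suc (snd (A!t))) \<or>
      (fst (A!Suc t) = Suc (fst (A!t)) \<and> snd (A!Suc t) = Suc (snd (A!t)))) \<and>
      ((fst (A!Suc t) = Suc (fst (A!t)) \<and> snd (A!Suc t) = Suc (snd (A!t))) \<longrightarrow> fst (A!t) \<noteq> snd (A!t)))
      \<longleftrightarrow> okstep (A!t) (A!Suc t)"
    by (rule step_iff)
  show ?thesis
    unfolding self_alignment_def is_alignment_def spath_idx diag_step_def e[symmetric]
    by blast
qed

lemma card_less_Suc: "card {t. t < Suc N \<and> P t} = card {t. t < N \<and> P t} + (if P N then 1 else 0)"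
proof -
  have "{t. t < Suc N \<and> P t} = (if P N then insert N {t. t < N \<and> P t} else {t. t < N \<and> P t})"
    by (auto simp: less_Suc_eq)
  then show ?thesis by simp
qed

lemma card_shift: "card {t. t < Suc N \<and> P t} = (if P 0 then 1 else 0) + card {t. t < N \<and> P (Suc t)}"
proof (induction N)
  case 0
  have "{t. t < Suc 0 \<and> P t} = (if P 0 then {0} else {})" by auto
  then show ?case by simp
next
  case (Suc N)
  show ?case using Suc by (subst card_less_Suc, subst (2) card_less_Suc) simp
qed

lemma scost_idx: "scost X A = card {t. t < length A - 1 \<and> \<not> ismatch X (A!t) (A!Suc t)}"
proof (induction A rule: spath.induct)
  case (1 X p q r)
  then show ?case by (simp add: card_shift)
qed auto

lemma align_cost_eq: "align_cost X A = scost X A"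
  unfolding align_cost_def scost_idx match_step_def diag_step_def ismatch_def by simp

lemma Bpre_idx: "Bpre X A = map (\<lambda>t. A!t) (filter (\<lambda>t. \<not> ismatch X (A!t) (A!Suc t)) [0..<length A - 1])"
proof (induction X A rule: spath.induct)
  case (1 X p q r)
  have u: "[0..<length (p # q # r) - 1] = 0 # map Suc [0..<length (q # r) - 1]"
    by (simp del: upt_Suc add: upt_conv_Cons map_Suc_upt)
  define P where "P = (\<lambda>t. \<not> ismatch X ((p # q # r)!t) ((p # q # r)!Suc t))"
  define P' where "P' = (\<lambda>t. \<not> ismatch X ((q # r)!t) ((q # r)!Suc t))"
  define L where "L = [0..<length (q # r) - 1]"
  have "map ((!) (p # q # r)) (filter P (map Suc L)) = map ((!) (q # r)) (filter P' L)"
    by (simp add: filter_map comp_def P_def P'_def)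
  moreover have "Bpre X (q # r) = map ((!) (q # r)) (filter P' L)" using 1 by (simp add: P'_def L_def)
  moreover have "P 0 = (\<not> ismatch X p q)" by (simp add: P_def)
  ultimately show ?case unfolding u P_def[symmetric] L_def[symmetric] by simp
qed auto

lemma breakpoints_eq:
  assumes "A \<noteq> []" "hd A = (0,0)" "spath X A"
  shows "breakpoints X A = Bpre X A @ [last A]"
proof -
  define L where "L = length A"
  have L: "L \<ge> 1" using assms by (cases A) (auto simp: L_def)
  have u: "[0..<L] = [0..<L-1] @ [L-1]" using L by (cases L) auto
  have nm0: "\<not> ismatch X (A!0) (A!Suc 0)" if "1 < L"
  proof -
    have "okstep (A!0) (A!Suc 0)" using assms(3) that by (simp add: spath_idx L_def)
    moreover have "A!0 = (0,0)" using assms(1,2) by (simp add: hd_conv_nth)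
    ultimately show ?thesis by (auto simp: okstep_def ismatch_def)
  qed
  have f: "filter (\<lambda>t. t = 0 \<or> t = L - 1 \<or> \<not> match_step X A t) [0..<L-1] =
        filter (\<lambda>t. \<not> ismatch X (A!t) (A!Suc t)) [0..<L-1]"
  proof (rule filter_cong[OF refl])
    fix t assume "t \<in> set [0..<L-1]"
    then have "t < L - 1" by simp
    then show "(t = 0 \<or> t = L - 1 \<or> \<not> match_step X A t) = (\<not> ismatch X (A!t) (A!Suc t))"
      using nm0 by (auto simp: match_step_def diag_step_def ismatch_def)
  qed
  have "last A = A ! (L - 1)" using assms(1) by (simp add: last_conv_nth L_def)
  then show ?thesis unfolding breakpoints_def Bpre_idx L_def[symmetric] u using f by simp
qed

section \<open>Paths and reachability\<close>

lemma spath_box: "spath X A \<Longrightarrow> A \<noteq> [] \<Longrightarrow> last A = (n, n) \<Longrightarrow> \<forall>q\<in>set A. fst q \<le> n \<and> snd q \<le> n"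
proof (induction A rule: spath.induct)
  case (1 X p q r)
  then have "\<forall>q'\<in>set (q # r). fst q' \<le> n \<and> snd q' \<le> n" by simp
  moreover have "fst p \<le> fst q" "snd p \<le> snd q" using 1 by (auto simp: okstep_def)
  ultimately show ?case by auto
next
  case ("2_2" X p) then show ?case by simp
qed simp

lemma path_R: "spath X (p # r) \<Longrightarrow> R X p c \<Longrightarrow> \<forall>q\<in>set (p # r). fst q \<le> length X \<and> snd q \<le> length X \<Longrightarrow>
   R X (last (p # r)) (c + scost X (p # r))"
proof (induction r arbitrary: p c)
  case Nil then show ?case by simp
next
  case (Cons q r)
  obtain x y where p: "p = (x,y)" by (cases p)
  obtain x' y' where q: "q = (x',y')" by (cases q)
  have ok: "okstep p q" and sp: "spath X (q # r)" using Cons.prems by auto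
  have qb: "x' \<le> length X" "y' \<le> length X" using Cons.prems(3) q by auto
  have Rq: "R X q (c + (if ismatch X p q then 0 else 1))"
  proof -
    consider "x' = Suc x" "y' = y" | "x' = x" "y' = Suc y" | "x' = Suc x" "y' = Suc y" "x \<noteq> y"
      using ok p q by (auto simp: okstep_def)
    then show ?thesis
    proof cases
      case 1 then show ?thesis using Rdel[of X x y c] Cons.prems(2) p q by (simp add: ismatch_def)
    next
      case 2 then show ?thesis using Rins[of X x y c] Cons.prems(2) p q by (simp add: ismatch_def)
    next
      case 3
      show ?thesis
      proof (cases "X ! x = X ! y")
        case True
        then show ?thesis using Rmat[of X x y c] Cons.prems(2) p q 3 qb by (simp add: ismatch_def)
      next
        case False
        then show ?thesis using Rsub[of X x y c] Cons.prems(2) p q 3 by (simp add: ismatch_def)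
      qed
    qed
  qed
  have "R X (last (q # r)) (c + (if ismatch X p q then 0 else 1) + scost X (q # r))"
    using Cons.IH[OF sp Rq] Cons.prems(3) by simp
  moreover have "last (p # q # r) = last (q # r)" by simp
  moreover have "c + scost X (p # q # r) = c + (if ismatch X p q then 0 else 1) + scost X (q # r)" by simp
  ultimately show ?case by metis
qed

lemma spath_snoc: "A \<noteq> [] \<Longrightarrow> spath X (A @ [q]) \<longleftrightarrow> spath X A \<and> okstep (last A) q"
  by (induction A rule: spath.induct) auto

lemma scost_snoc: "A \<noteq> [] \<Longrightarrow> scost X (A @ [q]) = scost X A + (if ismatch X (last A) q then 0 else 1)"
  by (induction A rule: spath.induct) auto

lemma R_path: "R X p c \<Longrightarrow> \<exists>A. A \<noteq> [] \<and> hd A = (0,0) \<and> last A = p \<and> spath X A \<and> scost X A \<le> c"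
proof (induction rule: R.induct)
  case R0 then show ?case by (intro exI[of _ "[(0,0)]"]) simp
next
  case (Rw p c) then show ?case using le_SucI by blast
next
  case (Rdel x y c)
  then obtain A where A: "A \<noteq> []" "hd A = (0,0)" "last A = (x,y)" "spath X A" "scost X A \<le> c" by blast
  show ?case using A by (intro exI[of _ "A @ [(Suc x, y)]"])
      (auto simp: spath_snoc scost_snoc okstep_def ismatch_def)
next
  case (Rins x y c)
  then obtain A where A: "A \<noteq> []" "hd A = (0,0)" "last A = (x,y)" "spath X A" "scost X A \<le> c" by blast
  show ?case using A by (intro exI[of _ "A @ [(x, Suc y)]"])
      (auto simp: spath_snoc scost_snoc okstep_def ismatch_def)
next
  case (Rsub x y c)
  then obtain A where A: "A \<noteq> []" "hd A = (0,0)" "last A = (x,y)" "spath X A" "scost X A \<le> c" by blast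
  show ?case using A Rsub.hyps by (intro exI[of _ "A @ [(Suc x, Suc y)]"])
      (auto simp: spath_snoc scost_snoc okstep_def ismatch_def)
next
  case (Rmat x y c)
  then obtain A where A: "A \<noteq> []" "hd A = (0,0)" "last A = (x,y)" "spath X A" "scost X A \<le> c" by blast
  show ?case using A Rmat.hyps by (intro exI[of _ "A @ [(Suc x, Suc y)]"])
      (auto simp: spath_snoc scost_snoc okstep_def ismatch_def)
qed

lemma R_nn: "R X (n, n) (2 * n)"
proof -
  have "R X (n, y) (n + y)" for y
    by (induction y) (auto simp: R_x0 intro: Rins)
  then show ?thesis by (metis mult_2)
qed

lemma selfed_attained: fixes X :: "nat list" shows "\<exists>A. self_alignment X A \<and> align_cost X A = selfed X"
proof -
  obtain A where "A \<noteq> [] \<and> hd A = (0,0) \<and> last A = (length X, length X) \<and> spath X A \<and> scost X A \<le> 2 * length X"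
    using R_path[OF R_nn] by blast
  then have "self_alignment X A" by (simp add: self_alignment_iff)
  then have ex: "\<exists>c A. self_alignment X A \<and> align_cost X A = c" by blast
  from LeastI_ex[OF ex] show ?thesis unfolding selfed_def .
qed

lemma selfed_R: fixes X :: "nat list" shows "R X (length X, length X) (selfed X)"
proof -
  obtain A where A: "self_alignment X A" "align_cost X A = selfed X" using selfed_attained by blast
  then have A': "A \<noteq> []" "hd A = (0,0)" "last A = (length X, length X)" "spath X A"
    by (auto simp: self_alignment_iff)
  obtain r where r: "A = (0,0) # r" using A'(1,2) by (cases A) auto
  have "R X (last A) (0 + scost X A)"
    using path_R[of X "(0,0)" r 0] A' r spath_box[OF A'(4,1,3)] R0 by simp
  then show ?thesis using A' A(2) by (simp add: align_cost_eq)
qed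

lemma selfed_le: fixes X :: "nat list" shows "self_alignment X A \<Longrightarrow> selfed X \<le> align_cost X A"
  unfolding selfed_def by (rule Least_le) blast

section \<open>Common suffix\<close>

definition lcs :: "nat list \<Rightarrow> nat \<Rightarrow> nat \<Rightarrow> nat" where
  "lcs X x y = lcp_len (rev (frag X 0 x)) (rev (frag X 0 y))"

lemma lcs_props:
  assumes "x \<le> length X" "y \<le> length X" "l = lcs X x y"
  shows "l \<le> x" "l \<le> y" "\<And>i. i < l \<Longrightarrow> X ! (x - 1 - i) = X ! (y - 1 - i)"
    "l < x \<Longrightarrow> l < y \<Longrightarrow> X ! (x - 1 - l) \<noteq> X ! (y - 1 - l)"
proof -
  have f: "frag X 0 x = take x X" "frag X 0 y = take y X" by (simp_all add: frag_def)
  have len: "length (rev (take x X)) = x" "length (rev (take y X)) = y" using assms by auto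
  show "l \<le> x" "l \<le> y" using lcp_len_le[of "rev (take x X)" "rev (take y X)"] assms(3) len
    by (auto simp: lcs_def f)
  have nth: "rev (take x X) ! i = X ! (x - 1 - i)" if "i < x" for i
    using that assms(1) by (simp add: rev_nth)
  have nth2: "rev (take y X) ! i = X ! (y - 1 - i)" if "i < y" for i
    using that assms(2) by (simp add: rev_nth)
  show "\<And>i. i < l \<Longrightarrow> X ! (x - 1 - i) = X ! (y - 1 - i)"
  proof -
    fix i assume "i < l"
    then have "rev (take x X) ! i = rev (take y X) ! i" using lcp_len_eq assms(3) by (simp add: lcs_def f)
    moreover have "i < x" "i < y" using \<open>i < l\<close> \<open>l \<le> x\<close> \<open>l \<le> y\<close> by auto
    ultimately show "X ! (x - 1 - i) = X ! (y - 1 - i)" using nth nth2 by simp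
  qed
  show "l < x \<Longrightarrow> l < y \<Longrightarrow> X ! (x - 1 - l) \<noteq> X ! (y - 1 - l)"
    using lcp_len_max[of "rev (take x X)" "rev (take y X)"] assms(3) len nth nth2
    by (simp add: lcs_def f)
qed


definition madd :: "nat \<Rightarrow> nat \<Rightarrow> nat \<Rightarrow> nat" where "madd w a b = (a + b) mod 2^w"
definition msub :: "nat \<Rightarrow> nat \<Rightarrow> nat \<Rightarrow> nat" where "msub w a b = (a + 2^w - b) mod 2^w"
definition mmul :: "nat \<Rightarrow> nat \<Rightarrow> nat \<Rightarrow> nat" where "mmul w a b = (a * b) mod 2^w"

declare exec_instr.simps[simp del]

lemma exec_simps[simp]:
  "exec_instr w X (LoadConst d v) (Config p r m ou) = Config (Suc p) (r(d := v mod 2^w)) m ou"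
  "exec_instr w X (Add d a b) (Config p r m ou) = Config (Suc p) (r(d := madd w (r a) (r b))) m ou"
  "exec_instr w X (Sub d a b) (Config p r m ou) = Config (Suc p) (r(d := msub w (r a) (r b))) m ou"
  "exec_instr w X (Mul d a b) (Config p r m ou) = Config (Suc p) (r(d := mmul w (r a) (r b))) m ou"
  "exec_instr w X (Load d a) (Config p r m ou) = Config (Suc p) (r(d := m (r a))) m ou"
  "exec_instr w X (Store a s) (Config p r m ou) = Config (Suc p) r (m(r a := r s)) ou"
  "exec_instr w X (Jmp t) (Config p r m ou) = Config t r m ou"
  "exec_instr w X (JmpLess a b t) (Config p r m ou) = (if r a < r b then Config t r m ou else Config (Suc p) r m ou)"
  "exec_instr w X (Out s) (Config p r m ou) = Config (Suc p) r m (ou @ [r s])"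
  "exec_instr w X (PLength d) (Config p r m ou) = Config (Suc p) (r(d := length X)) m ou"
  "exec_instr w X (PLCP d a b c e) (Config p r m ou) =
     Config (Suc p) (r(d := lcp_len (frag X (r a) (r b)) (frag X (r c) (r e)))) m ou"
  "exec_instr w X (PLCPR d a b c e) (Config p r m ou) =
     Config (Suc p) (r(d := lcp_len (rev (frag X (r a) (r b))) (rev (frag X (r c) (r e))))) m ou"
  by (simp_all add: madd_def msub_def mmul_def exec_instr.simps)

lemma step_Config[simp]: "step prog w X (Config p r m ou) =
   (if p < 124 \<and> prog ! p \<noteq> Halt then exec_instr w X (prog ! p) (Config p r m ou) else Config p r m ou)"
  by (auto simp: step_def halted_def)

lemma halted_Config[simp]: "halted prog (Config p r m ou) \<longleftrightarrow> \<not> (p < 124 \<and> prog ! p \<noteq> Halt)"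
  by (auto simp: halted_def)

fun runs :: "nat \<Rightarrow> nat list \<Rightarrow> nat set \<Rightarrow> (config \<Rightarrow> bool) \<Rightarrow> nat \<Rightarrow> config \<Rightarrow> bool" where
  "runs w X S Q 0 c = (pc c \<in> S \<and> Q c)"
| "runs w X S Q (Suc T) c = (if pc c \<in> S then Q c else \<not> halted prog c \<and> runs w X S Q T (step prog w X c))"

lemma runs_num[simp]: "runs w X S Q (numeral n) c =
  (if pc c \<in> S then Q c else \<not> halted prog c \<and> runs w X S Q (pred_numeral n) (step prog w X c))"
  by (simp add: numeral_eq_Suc)


definition reach :: "nat \<Rightarrow> nat list \<Rightarrow> config \<Rightarrow> (config \<Rightarrow> bool) \<Rightarrow> nat \<Rightarrow> bool" where
  "reach w X c Q T \<longleftrightarrow> (\<exists>t\<le>T. Q ((step prog w X ^^ t) c))"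

lemma runs_reach: "runs w X S Q T c \<Longrightarrow> reach w X c Q T"
proof (induction T arbitrary: c)
  case 0 then show ?case by (auto simp: reach_def intro: exI[of _ 0])
next
  case (Suc T)
  show ?case
  proof (cases "pc c \<in> S")
    case True then show ?thesis using Suc.prems by (auto simp: runs.simps(2) reach_def intro: exI[of _ 0])
  next
    case False
    then have "runs w X S Q T (step prog w X c)" using Suc.prems by (simp add: runs.simps(2))
    from Suc.IH[OF this] obtain t where "t \<le> T" "Q ((step prog w X ^^ t) (step prog w X c))"
      by (auto simp: reach_def)
    then show ?thesis unfolding reach_def
      by (intro exI[of _ "Suc t"]) (simp add: funpow_Suc_right del: funpow.simps)
  qed
qed

lemma reach1: "runs w X S Q T (step prog w X c) \<Longrightarrow> reach w X c Q (Suc T)"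
proof -
  assume "runs w X S Q T (step prog w X c)"
  from runs_reach[OF this] obtain t where "t \<le> T" "Q ((step prog w X ^^ t) (step prog w X c))"
    by (auto simp: reach_def)
  then show ?thesis unfolding reach_def
    by (intro exI[of _ "Suc t"]) (simp add: funpow_Suc_right del: funpow.simps)
qed

lemma reach_trans: "reach w X c P T1 \<Longrightarrow> (\<And>c'. P c' \<Longrightarrow> reach w X c' Q T2) \<Longrightarrow> reach w X c Q (T1 + T2)"
proof -
  assume a: "reach w X c P T1" and b: "\<And>c'. P c' \<Longrightarrow> reach w X c' Q T2"
  from a obtain t1 where t1: "t1 \<le> T1" "P ((step prog w X ^^ t1) c)" by (auto simp: reach_def)
  from b[OF t1(2)] obtain t2 where t2: "t2 \<le> T2" "Q ((step prog w X ^^ t2) ((step prog w X ^^ t1) c))"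
    by (auto simp: reach_def)
  then show ?thesis unfolding reach_def using t1
    by (intro exI[of _ "t2 + t1"]) (simp add: funpow_add)
qed

lemma reach_mono: "reach w X c Q T \<Longrightarrow> T \<le> T' \<Longrightarrow> (\<And>c'. Q c' \<Longrightarrow> Q' c') \<Longrightarrow> reach w X c Q' T'"
  unfolding reach_def by (meson order_trans)

lemma reach1n: "runs w X S Q (pred_numeral n) (step prog w X c) \<Longrightarrow> reach w X c Q (numeral n)"
  using reach1[of w X S Q "pred_numeral n" c] by (simp add: numeral_eq_Suc)

definition v1f where "v1f w K1 j s = (if j < K1 \<or> K1 < j then (if s < 1 then s else madd w s 1) else s)"
definition v2f where "v2f w v1 s1 = (if s1 < 1 then v1 else (if madd w s1 1 < v1 then v1 else madd w (madd w s1 1) 0))"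
definition v3f :: "nat \<Rightarrow> nat \<Rightarrow> nat \<Rightarrow> nat" where "v3f w v2 s0 = (if s0 < v2 then v2 else madd w s0 0)"
definition v4f where "v4f w X n K1 j v3 = (if v3 < 1 then v3 else if j < K1 \<or> K1 < j then
   madd w v3 (lcp_len (frag X (msub w v3 1) n) (frag X (msub w (madd w (msub w v3 1) j) K1) n)) else v3)"

lemma blkA:
  assumes r: "r 2 = 1" "r 3 = K1" "r 6 = j" "r 8 = pb"
  shows "reach w X (Config 16 r m ou)
    (\<lambda>c'. pc c' = 23 \<and> mem c' = m \<and> outp c' = ou \<and> regs c' 11 = madd w pb j \<and>
       regs c' 10 = v1f w K1 j (m (madd w pb j)) \<and> (\<forall>i. i \<noteq> 10 \<and> i \<noteq> 11 \<longrightarrow> regs c' i = r i)) 7"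
  apply (rule reach1n[where S="{23}"])
  apply (simp add: r r[unfolded One_nat_def] v1f_def)
  done

lemma blkB:
  assumes r: "r 2 = 1" "r 10 = v1" "r 11 = a" "r 20 = 0"
  shows "reach w X (Config 23 r m ou)
    (\<lambda>c'. pc c' = 29 \<and> mem c' = m \<and> outp c' = ou \<and>
       regs c' 10 = v2f w v1 (m (madd w a 1)) \<and> (\<forall>i. i \<noteq> 10 \<and> i \<noteq> 12 \<longrightarrow> regs c' i = r i)) 7"
  apply (rule reach1n[where S="{29}"])
  apply (simp add: r r[unfolded One_nat_def] v2f_def)
  done

lemma blkC:
  assumes r: "r 2 = 1" "r 10 = v2" "r 11 = a" "r 20 = 0"
  shows "reach w X (Config 29 r m ou)
    (\<lambda>c'. pc c' = 33 \<and> mem c' = m \<and> outp c' = ou \<and>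
       regs c' 10 = v3f w v2 (m (msub w a 1)) \<and> (\<forall>i. i \<noteq> 10 \<and> i \<noteq> 12 \<longrightarrow> regs c' i = r i)) 5"
  apply (rule reach1n[where S="{33}"])
  apply (simp add: r r[unfolded One_nat_def] v3f_def)
  done

lemma blkD:
  assumes r: "r 1 = n" "r 2 = 1" "r 3 = K1" "r 6 = j" "r 10 = v3"
  shows "reach w X (Config 33 r m ou)
    (\<lambda>c'. pc c' = 42 \<and> mem c' = m \<and> outp c' = ou \<and>
       regs c' 10 = v4f w X n K1 j v3 \<and> (\<forall>i. i \<noteq> 10 \<and> i \<noteq> 12 \<and> i \<noteq> 13 \<longrightarrow> regs c' i = r i)) 10"
  apply (rule reach1n[where S="{42}"])
  apply (simp add: r r[unfolded One_nat_def] v4f_def)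
  done

lemma blkE:
  assumes r: "r 2 = 1" "r 6 = j" "r 7 = cb" "r 10 = v" "r 14 = J2"
  shows "reach w X (Config 42 r m ou)
    (\<lambda>c'. pc c' = (if madd w j 1 < J2 then 16 else 6) \<and> mem c' = m(madd w cb j := v) \<and> outp c' = ou \<and>
       regs c' 6 = madd w j 1 \<and> (\<forall>i. i \<noteq> 6 \<and> i \<noteq> 11 \<longrightarrow> regs c' i = r i)) 5"
  apply (rule reach1n[where S="{6,16}"])
  apply (simp add: r)
  done


lemma one_mod[simp]: "0 < w \<Longrightarrow> 1 mod 2^w = (1::nat)"
  by (simp add: mod_less)

lemma cfg1: "Config (Suc 0) r m ou = Config 1 r m ou" by simp

lemma blkInit:
  assumes "0 < w"
  shows "reach w X (init_config k)
    (\<lambda>c'. pc c' = 6 \<and> mem c' = (\<lambda>_. 0)(madd w k (1) := 1) \<and> outp c' = [] \<and>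
       regs c' 0 = k \<and> regs c' 1 = length X \<and> regs c' 2 = 1 \<and> regs c' 3 = madd w k (1) \<and>
       regs c' 14 = madd w (madd w k (1)) (madd w k (1)) \<and>
       regs c' 4 = madd w (madd w (madd w k (1)) (madd w k (1))) (1) \<and>
       (\<forall>i. i \<noteq> 0 \<and> i \<noteq> 1 \<and> i \<noteq> 2 \<and> i \<noteq> 3 \<and> i \<noteq> 4 \<and> i \<noteq> 14 \<longrightarrow> regs c' i = 0)) 8"
  unfolding init_config_def
  apply (rule reach1n[where S="{6}"])
  apply (simp add: assms)
  done

lemma blkRow:
  assumes r: "r 0 = k" "r 1 = n" "r 2 = 1" "r 3 = K1" "r 4 = Wd" "r 5 = e" "r 7 = cb" "r 20 = 0"
  shows "reach w X (Config 6 r m ou)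
    (\<lambda>c'. mem c' = m \<and>
      (if n < m (madd w cb K1) then pc c' = 47 \<and> outp c' = ou \<and> (\<forall>i. i \<noteq> 11 \<and> i \<noteq> 12 \<longrightarrow> regs c' i = r i)
       else if e < k then pc c' = 16 \<and> outp c' = ou \<and> regs c' 8 = madd w cb 0 \<and> regs c' 7 = madd w cb Wd
          \<and> regs c' 5 = madd w e 1 \<and> regs c' 6 = madd w 1 0
          \<and> (\<forall>i. i \<noteq> 11 \<and> i \<noteq> 12 \<and> i \<noteq> 5 \<and> i \<noteq> 6 \<and> i \<noteq> 7 \<and> i \<noteq> 8 \<longrightarrow> regs c' i = r i)
       else pc c' = 11 \<and> outp c' = ou @ [0])) 10"
  apply (rule reach1n[where S="{11,16,47}"])
  apply (simp add: r r[unfolded One_nat_def])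
  done

lemma blkFound:
  assumes r: "r 1 = n" "r 3 = K1" "r 4 = Wd" "r 5 = e" "r 20 = 0"
  shows "reach w X (Config 47 r m ou)
    (\<lambda>c'. pc c' = 52 \<and> mem c' = m \<and> outp c' = ou \<and> regs c' 15 = madd w n 0 \<and> regs c' 16 = madd w n 0
       \<and> regs c' 17 = madd w e 0 \<and> regs c' 19 = mmul w K1 Wd \<and> regs c' 18 = madd w (mmul w K1 Wd) 0
       \<and> (\<forall>i. i \<noteq> 15 \<and> i \<noteq> 16 \<and> i \<noteq> 17 \<and> i \<noteq> 18 \<and> i \<noteq> 19 \<longrightarrow> regs c' i = r i)) 5"
  apply (rule reach1n[where S="{52}"])
  apply (simp add: r r[unfolded One_nat_def])
  done


lemma blkTB1:
  assumes r: "r 15 = x" "r 16 = y" "r 20 = 0"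
  shows "reach w X (Config 52 r m ou)
    (\<lambda>c'. mem c' = m \<and> outp c' = ou \<and>
      (if 0 < x \<or> 0 < y then pc c' = 61 \<and>
          regs c' 15 = (if x < y \<or> y < x then msub w x (lcs X x y) else x) \<and>
          regs c' 16 = (if x < y \<or> y < x then msub w y (lcs X x y) else y) \<and>
          (\<forall>i. i \<noteq> 15 \<and> i \<noteq> 16 \<and> i \<noteq> 21 \<longrightarrow> regs c' i = r i)
       else pc c' = 104 \<and> regs c' = r)) 9"
  apply (rule reach1n[where S="{61,104}"])
  apply (simp add: r lcs_def)
  done

definition lk :: "nat \<Rightarrow> (nat \<Rightarrow> nat) \<Rightarrow> nat \<Rightarrow> nat \<Rightarrow> nat \<Rightarrow> nat \<Rightarrow> bool" where
  "lk w m rb K1 x' y' = (x' < m (madd w (msub w (madd w y' K1) x') rb))"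

definition tbsel :: "nat \<Rightarrow> (nat \<Rightarrow> nat) \<Rightarrow> nat \<Rightarrow> nat \<Rightarrow> nat \<Rightarrow> nat \<Rightarrow> (nat \<times> nat) option" where
  "tbsel w m rb K1 x y =
    (if 0 < x \<and> lk w m rb K1 (msub w x 1) (madd w y 0) then Some (msub w x 1, madd w y 0)
     else if 0 < y \<and> lk w m rb K1 (madd w x 0) (msub w y 1) then Some (madd w x 0, msub w y 1)
     else if 0 < x \<and> 0 < y \<and> (x < y \<or> y < x) \<and> lk w m rb K1 (msub w x 1) (msub w y 1)
       then Some (msub w x 1, msub w y 1) else None)"

lemma blkTB2:
  assumes r: "r 2 = 1" "r 3 = K1" "r 4 = Wd" "r 15 = x" "r 16 = y" "r 17 = c" "r 20 = 0"
  shows "reach w X (Config 61 r m ou)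
    (\<lambda>c'. mem c' = m \<and> outp c' = ou \<and>
      (case tbsel w m (mmul w (msub w c 1) Wd) K1 x y of
        Some (x', y') \<Rightarrow> pc c' = 96 \<and> regs c' 23 = x' \<and> regs c' 24 = y' \<and>
          (\<forall>i. i \<noteq> 22 \<and> i \<noteq> 23 \<and> i \<noteq> 24 \<and> i \<noteq> 25 \<longrightarrow> regs c' i = r i)
      | None \<Rightarrow> pc c' = 104)) 35"
  apply (rule reach1n[where S="{96,104}"])
  apply (simp add: r r[unfolded One_nat_def] tbsel_def lk_def)
  done

lemma blkTB3:
  assumes r: "r 2 = 1" "r 17 = c" "r 18 = sp" "r 20 = 0" "r 23 = x'" "r 24 = y'"
  shows "reach w X (Config 96 r m ou)
    (\<lambda>c'. pc c' = 52 \<and> mem c' = m(sp := x', madd w sp 1 := y') \<and> outp c' = ou \<and>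
       regs c' 15 = madd w x' 0 \<and> regs c' 16 = madd w y' 0 \<and> regs c' 17 = msub w c 1 \<and>
       regs c' 18 = madd w (madd w sp 1) 1 \<and>
       (\<forall>i. i \<noteq> 15 \<and> i \<noteq> 16 \<and> i \<noteq> 17 \<and> i \<noteq> 18 \<longrightarrow> regs c' i = r i)) 8"
  apply (rule reach1n[where S="{52}"])
  apply (simp add: r r[unfolded One_nat_def])
  done

lemma blkOut:
  assumes r: "r 2 = 1"
  shows "reach w X (Config 104 r m ou)
    (\<lambda>c'. pc c' = 105 \<and> mem c' = m \<and> outp c' = ou @ [1] \<and> regs c' = r) 2"
  apply (rule reach1n[where S="{105}"])
  apply (simp add: r)
  done

lemma blkPop:
  assumes r: "r 1 = n" "r 2 = 1" "r 18 = sp" "r 19 = sb"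
  shows "reach w X (Config 105 r m ou)
    (\<lambda>c'. mem c' = m \<and>
       (if sb < sp then pc c' = 105 \<and> regs c' 18 = msub w (msub w sp 1) 1 \<and>
          outp c' = ou @ [m (msub w (msub w sp 1) 1), m (madd w (msub w (msub w sp 1) 1) 1)] \<and>
          (\<forall>i. i \<noteq> 18 \<and> i \<noteq> 25 \<and> i \<noteq> 26 \<longrightarrow> regs c' i = r i)
        else pc c' = 108 \<and> outp c' = ou @ [n, n])) 10"
  apply (rule reach1n[where S="{105,108}"])
  apply (simp add: r r[unfolded One_nat_def])
  done


lemma cfg_ex: "\<exists>r m ou. c = Config (pc c) r m ou \<and> regs c = r \<and> mem c = m \<and> outp c = ou"
  by (cases c) auto

lemma blkA_g:
  assumes "pc c = 16" "regs c 2 = 1" "regs c 3 = K1" "regs c 6 = j" "regs c 8 = pb"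
  shows "reach w X c
    (\<lambda>c'. pc c' = 23 \<and> mem c' = mem c \<and> outp c' = outp c \<and> regs c' 11 = madd w pb j \<and>
       regs c' 10 = v1f w K1 j (mem c (madd w pb j)) \<and> (\<forall>i. i \<noteq> 10 \<and> i \<noteq> 11 \<longrightarrow> regs c' i = regs c i)) 7"
proof -
  obtain p r m ou where c: "c = Config p r m ou" by (cases c)
  show ?thesis using assms blkA[of r K1 j pb w X m ou] unfolding c by simp
qed

lemma blkB_g:
  assumes "pc c = 23" "regs c 2 = 1" "regs c 10 = v1" "regs c 11 = a" "regs c 20 = 0"
  shows "reach w X c
    (\<lambda>c'. pc c' = 29 \<and> mem c' = mem c \<and> outp c' = outp c \<and>
       regs c' 10 = v2f w v1 (mem c (madd w a 1)) \<and> (\<forall>i. i \<noteq> 10 \<and> i \<noteq> 12 \<longrightarrow> regs c' i = regs c i)) 7"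
proof -
  obtain p r m ou where c: "c = Config p r m ou" by (cases c)
  show ?thesis using assms blkB[of r v1 a w X m ou] unfolding c by simp
qed

lemma blkC_g:
  assumes "pc c = 29" "regs c 2 = 1" "regs c 10 = v2" "regs c 11 = a" "regs c 20 = 0"
  shows "reach w X c
    (\<lambda>c'. pc c' = 33 \<and> mem c' = mem c \<and> outp c' = outp c \<and>
       regs c' 10 = v3f w v2 (mem c (msub w a 1)) \<and> (\<forall>i. i \<noteq> 10 \<and> i \<noteq> 12 \<longrightarrow> regs c' i = regs c i)) 5"
proof -
  obtain p r m ou where c: "c = Config p r m ou" by (cases c)
  show ?thesis using assms blkC[of r v2 a w X m ou] unfolding c by simp
qed

lemma blkD_g:
  assumes "pc c = 33" "regs c 1 = n" "regs c 2 = 1" "regs c 3 = K1" "regs c 6 = j" "regs c 10 = v3"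
  shows "reach w X c
    (\<lambda>c'. pc c' = 42 \<and> mem c' = mem c \<and> outp c' = outp c \<and>
       regs c' 10 = v4f w X n K1 j v3 \<and> (\<forall>i. i \<noteq> 10 \<and> i \<noteq> 12 \<and> i \<noteq> 13 \<longrightarrow> regs c' i = regs c i)) 10"
proof -
  obtain p r m ou where c: "c = Config p r m ou" by (cases c)
  show ?thesis using assms blkD[of r n K1 j v3 w X m ou] unfolding c by simp
qed

lemma blkE_g:
  assumes "pc c = 42" "regs c 2 = 1" "regs c 6 = j" "regs c 7 = cb" "regs c 10 = v" "regs c 14 = J2"
  shows "reach w X c
    (\<lambda>c'. pc c' = (if madd w j 1 < J2 then 16 else 6) \<and> mem c' = (mem c)(madd w cb j := v) \<and> outp c' = outp c \<and>
       regs c' 6 = madd w j 1 \<and> (\<forall>i. i \<noteq> 6 \<and> i \<noteq> 11 \<longrightarrow> regs c' i = regs c i)) 5"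
proof -
  obtain p r m ou where c: "c = Config p r m ou" by (cases c)
  show ?thesis using assms blkE[of r j cb v J2 w X m ou] unfolding c by simp
qed

definition colres where
  "colres w X n m pb K1 j = v4f w X n K1 j (v3f w (v2f w (v1f w K1 j (m (madd w pb j)))
      (m (madd w (madd w pb j) 1))) (m (msub w (madd w pb j) 1)))"

lemma colraw:
  assumes a: "pc c = 16" "regs c 1 = n" "regs c 2 = 1" "regs c 3 = K1" "regs c 6 = j" "regs c 7 = cb"
    "regs c 8 = pb" "regs c 14 = J2" "regs c 20 = 0"
  shows "reach w X c (\<lambda>c'. pc c' = (if madd w j 1 < J2 then 16 else 6) \<and>
     mem c' = (mem c)(madd w cb j := colres w X n (mem c) pb K1 j) \<and> outp c' = outp c \<and>
     regs c' 6 = madd w j 1 \<and> (\<forall>i. i \<noteq> 6 \<and> i \<noteq> 10 \<and> i \<noteq> 11 \<and> i \<noteq> 12 \<and> i \<noteq> 13 \<longrightarrow> regs c' i = regs c i)) (7 + (7 + (5 + (10 + 5))))"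
  apply (rule reach_trans[OF blkA_g[OF a(1,3,4,5,7)]])
  apply (elim conjE)
  apply (rule reach_trans[OF blkB_g])
       apply (assumption | simp add: a)
      apply (assumption | simp add: a)
     apply (assumption | simp add: a)
    apply (assumption | simp add: a)
   apply (assumption | simp add: a)
  apply (elim conjE)
  apply (rule reach_trans[OF blkC_g])
       apply (assumption | simp add: a)
      apply (assumption | simp add: a)
     apply (assumption | simp add: a)
    apply (assumption | simp add: a)
   apply (assumption | simp add: a)
  apply (elim conjE)
  apply (rule reach_trans[OF blkD_g])
        apply (assumption | simp add: a)
       apply (assumption | simp add: a)
      apply (assumption | simp add: a)
     apply (assumption | simp add: a)
    apply (assumption | simp add: a)
   apply (assumption | simp add: a)
  apply (elim conjE)
  apply (rule reach_mono[OF blkE_g])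
          apply (assumption | simp add: a)
         apply (assumption | simp add: a)
        apply (assumption | simp add: a)
       apply (assumption | simp add: a)
      apply (assumption | simp add: a)
     apply (assumption | simp add: a)
    apply simp
  apply (auto simp: colres_def a a[unfolded One_nat_def])
  done


lemma madd_eq: "a + b < 2^w \<Longrightarrow> madd w a b = a + b" unfolding madd_def by (rule mod_less)
lemma msub_eq: "b \<le> a \<Longrightarrow> a < 2^w \<Longrightarrow> msub w a b = a - b"
proof -
  assume "b \<le> a" "a < 2^w"
  then have "a + 2^w - b = (a - b) + 2^w" by linarith
  then have "msub w a b = (a - b + 2^w) mod 2^w" by (simp only: msub_def)
  also have "\<dots> = (a - b) mod 2^w" by (rule mod_add_self2)
  also have "\<dots> = a - b" using \<open>a < 2^w\<close> by (intro mod_less) linarith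
  finally show ?thesis .
qed
lemma madd0: "a < 2^w \<Longrightarrow> madd w a 0 = a" using madd_eq[of a 0 w] by simp
lemma mmul_eq: "a * b < 2^w \<Longrightarrow> mmul w a b = a * b" unfolding mmul_def by (rule mod_less)

lemma colres_val:
  fixes X :: "nat list"
  assumes b: "s \<le> B" "s1 \<le> B" "s0 \<le> B" "B + 2 + j + length X < 2^w"
    and v: "0 < candv K1 j s s1 s0 \<Longrightarrow> K1 \<le> candv K1 j s s1 s0 - 1 + j"
  shows "v4f w X (length X) K1 j (v3f w (v2f w (v1f w K1 j s) s1) s0) = slide X K1 j (candv K1 j s s1 s0)"
proof -
  define v where "v = candv K1 j s s1 s0"
  have a1: "madd w s 1 = s + 1" "madd w s1 1 = s1 + 1" "madd w (s1 + 1) 0 = s1 + 1" "madd w s0 0 = s0"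
    using b by (intro madd_eq madd0; linarith)+
  have v3: "v3f w (v2f w (v1f w K1 j s) s1) s0 = v"
    unfolding v1f_def v2f_def v3f_def a1 v_def candv_def by (auto simp: max_def)
  have vb: "v \<le> B + 1" using b by (auto simp: v_def candv_def)
  have l: "lcp_len (drop (v-1) X) (drop (v-1+j-K1) X) \<le> length X"
    using lcp_len_le[of "drop (v-1) X" "drop (v-1+j-K1) X"] by (auto intro: le_trans[OF _ diff_le_self])
  show ?thesis
  proof (cases "0 < v \<and> j \<noteq> K1")
    case True
    then have vv: "K1 \<le> v - 1 + j" using v by (simp add: v_def)
    have e1: "msub w v 1 = v - 1" using True vb b by (simp add: msub_eq)
    have e2: "madd w (v - 1) j = v - 1 + j" using vb b by (simp add: madd_eq)
    have e3: "msub w (v - 1 + j) K1 = v - 1 + j - K1" using vv vb b by (simp add: msub_eq)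
    have e4: "madd w v (lcp_len (drop (v-1) X) (drop (v-1+j-K1) X)) = v + lcp_len (drop (v-1) X) (drop (v-1+j-K1) X)"
      using vb b l by (simp add: madd_eq)
    have "j < K1 \<or> K1 < j" using True by auto
    have tk: "take (length X) X = X" by simp
    show ?thesis using True \<open>j < K1 \<or> K1 < j\<close> unfolding v3 v_def[symmetric] v4f_def frag_def tk e1 e2 e3 e4
      by (simp add: slide_def)
  next
    case False
    then show ?thesis unfolding v3 v_def[symmetric] by (auto simp: v4f_def slide_def)
  qed
qed


section \<open>Abstract traceback\<close>

lemma R_pred: "R X q c \<Longrightarrow> q \<noteq> (0,0) \<Longrightarrow>
  \<not> (0 < fst q \<and> 0 < snd q \<and> fst q \<noteq> snd q \<and> fst q - 1 < length X \<and> snd q - 1 < length X \<and> X ! (fst q - 1) = X ! (snd q - 1)) \<Longrightarrow>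
  0 < c \<and> (0 < fst q \<and> R X (fst q - 1, snd q) (c - 1) \<or> 0 < snd q \<and> R X (fst q, snd q - 1) (c - 1) \<or>
     0 < fst q \<and> 0 < snd q \<and> fst q \<noteq> snd q \<and> R X (fst q - 1, snd q - 1) (c - 1))"
proof (induction rule: R.induct)
  case R0 then show ?case by simp
next
  case (Rw p c)
  then have "0 < c" and d: "0 < fst p \<and> R X (fst p - 1, snd p) (c - 1) \<or> 0 < snd p \<and> R X (fst p, snd p - 1) (c - 1) \<or>
     0 < fst p \<and> 0 < snd p \<and> fst p \<noteq> snd p \<and> R X (fst p - 1, snd p - 1) (c - 1)" by auto
  have m: "R X q (c - 1) \<Longrightarrow> R X q (Suc c - 1)" for q using R_mono[of X q "c - 1" "Suc c - 1"] by simp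
  show ?case using d m by auto
next
  case (Rdel x y c) then show ?case by simp
next
  case (Rins x y c) then show ?case by simp
next
  case (Rsub x y c) then show ?case by simp
next
  case (Rmat x y c) then show ?case by simp
qed

definition TInv :: "nat list \<Rightarrow> nat \<Rightarrow> nat \<Rightarrow> nat \<Rightarrow> nat \<Rightarrow> (nat \<times> nat) list \<Rightarrow> bool" where
  "TInv X E x y c S \<longleftrightarrow> x \<le> length X \<and> y \<le> length X \<and> R X (x,y) c \<and> S \<noteq> [] \<and> spath X S \<and>
     hd S = (x,y) \<and> last S = (length X, length X) \<and> scost X S + c = E"

lemma Bpre_len: "length (Bpre X S) = scost X S"
  by (induction X S rule: Bpre.induct) auto

lemma tinv_slide:
  assumes T: "TInv X E x y c S" and l: "l = lcs X x y" and ne: "x \<noteq> y"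
  shows "\<exists>S1. TInv X E (x - l) (y - l) c S1 \<and> Bpre X S1 = Bpre X S"
proof -
  have xy: "x \<le> length X" "y \<le> length X" using T by (auto simp: TInv_def)
  note P = lcs_props[OF xy l]
  have "i \<le> l \<Longrightarrow> \<exists>S1. TInv X E (x - i) (y - i) c S1 \<and> Bpre X S1 = Bpre X S" for i
  proof (induction i)
    case 0 then show ?case using T by auto
  next
    case (Suc i)
    then obtain S1 where S1: "TInv X E (x - i) (y - i) c S1" "Bpre X S1 = Bpre X S" by auto
    have il: "i < l" using Suc by simp
    then have ix: "i < x" "i < y" using P(1,2) by auto
    have m: "X ! (x - 1 - i) = X ! (y - 1 - i)" using P(3)[OF il] .
    obtain r where r: "S1 = (x - i, y - i) # r" using S1(1) by (cases S1) (auto simp: TInv_def)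
    define a where "a = x - Suc i"
    define b where "b = y - Suc i"
    have ab: "Suc a = x - i" "Suc b = y - i" "a = x - 1 - i" "b = y - 1 - i" "a \<noteq> b"
      using ix ne by (auto simp: a_def b_def)
    have ism: "ismatch X (a, b) (x - i, y - i)"
      using m ab unfolding ismatch_def by simp
    have R1: "R X (a, b) c"
    proof -
      have "R X (a + Suc i, b + Suc i) c" using T ix by (simp add: TInv_def a_def b_def)
      then show ?thesis by (rule R_back)
    qed
    have ok: "okstep (a, b) (x - i, y - i)"
      using ab unfolding okstep_def by simp
    have sp: "spath X ((a, b) # S1)" using S1(1) r ok by (simp add: TInv_def)
    have sc: "scost X ((a, b) # S1) = scost X S1" using r ism by simp
    have bp: "Bpre X ((a, b) # S1) = Bpre X S1" using r ism by simp
    have "TInv X E a b c ((a, b) # S1) \<and> Bpre X ((a, b) # S1) = Bpre X S"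
      using S1 sp sc bp R1 xy r unfolding TInv_def by (simp add: a_def b_def le_diff_conv2 ) linarith
    then show ?case unfolding a_def b_def by blast
  qed
  then show ?thesis by blast
qed

lemma tinv_edit:
  assumes T: "TInv X E x y c S" and c: "0 < c" and Rp: "R X p (c - 1)"
    and p: "(0 < x \<and> p = (x - 1, y)) \<or> (0 < y \<and> p = (x, y - 1)) \<or>
            (0 < x \<and> 0 < y \<and> x \<noteq> y \<and> X ! (x - 1) \<noteq> X ! (y - 1) \<and> p = (x - 1, y - 1))"
  shows "TInv X E (fst p) (snd p) (c - 1) (p # S) \<and> Bpre X (p # S) = p # Bpre X S"
proof -
  obtain r where r: "S = (x, y) # r" using T by (cases S) (auto simp: TInv_def)
  have ok: "okstep p (x, y)" and nm: "\<not> ismatch X p (x, y)"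
    using p by (cases p; auto simp: okstep_def ismatch_def)+
  show ?thesis using T r ok nm c Rp p by (auto simp: TInv_def)
qed

lemma tinv_final:
  assumes T: "TInv X E 0 0 c S"
  shows "self_alignment X S \<and> align_cost X S \<le> E \<and> breakpoints X S = Bpre X S @ [(length X, length X)]"
  using T breakpoints_eq[of S X] by (auto simp: TInv_def self_alignment_iff align_cost_eq)


lemma blkTB1_g:
  assumes "pc c = 52" "regs c 15 = x" "regs c 16 = y" "regs c 20 = 0"
  shows "reach w X c
    (\<lambda>c'. mem c' = mem c \<and> outp c' = outp c \<and>
      (if 0 < x \<or> 0 < y then pc c' = 61 \<and>
          regs c' 15 = (if x < y \<or> y < x then msub w x (lcs X x y) else x) \<and>
          regs c' 16 = (if x < y \<or> y < x then msub w y (lcs X x y) else y) \<and>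
          (\<forall>i. i \<noteq> 15 \<and> i \<noteq> 16 \<and> i \<noteq> 21 \<longrightarrow> regs c' i = regs c i)
       else pc c' = 104 \<and> regs c' = regs c)) 9"
proof -
  obtain p r m ou where c: "c = Config p r m ou" by (cases c)
  have p: "p = 52" using assms c by simp
  have "reach w X (Config 52 r m ou) (\<lambda>c'. mem c' = m \<and> outp c' = ou \<and>
      (if 0 < x \<or> 0 < y then pc c' = 61 \<and>
          regs c' 15 = (if x < y \<or> y < x then msub w x (lcs X x y) else x) \<and>
          regs c' 16 = (if x < y \<or> y < x then msub w y (lcs X x y) else y) \<and>
          (\<forall>i. i \<noteq> 15 \<and> i \<noteq> 16 \<and> i \<noteq> 21 \<longrightarrow> regs c' i = r i)
       else pc c' = 104 \<and> regs c' = r)) 9" by (rule blkTB1) (use assms c in auto)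
  then show ?thesis unfolding c p by (rule reach_mono) auto
qed

lemma blkTB2_g:
  assumes "pc c = 61" "regs c 2 = 1" "regs c 3 = K1" "regs c 4 = Wd" "regs c 15 = x" "regs c 16 = y" "regs c 17 = cc" "regs c 20 = 0"
  shows "reach w X c
    (\<lambda>c'. mem c' = mem c \<and> outp c' = outp c \<and>
      (case tbsel w (mem c) (mmul w (msub w cc 1) Wd) K1 x y of
        Some (x', y') \<Rightarrow> pc c' = 96 \<and> regs c' 23 = x' \<and> regs c' 24 = y' \<and>
          (\<forall>i. i \<noteq> 22 \<and> i \<noteq> 23 \<and> i \<noteq> 24 \<and> i \<noteq> 25 \<longrightarrow> regs c' i = regs c i)
      | None \<Rightarrow> pc c' = 104)) 35"
proof -
  obtain p r m ou where c: "c = Config p r m ou" by (cases c)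
  have p: "p = 61" using assms c by simp
  have "reach w X (Config 61 r m ou) (\<lambda>c'. mem c' = m \<and> outp c' = ou \<and>
      (case tbsel w m (mmul w (msub w cc 1) Wd) K1 x y of
        Some (x', y') \<Rightarrow> pc c' = 96 \<and> regs c' 23 = x' \<and> regs c' 24 = y' \<and>
          (\<forall>i. i \<noteq> 22 \<and> i \<noteq> 23 \<and> i \<noteq> 24 \<and> i \<noteq> 25 \<longrightarrow> regs c' i = r i)
      | None \<Rightarrow> pc c' = 104)) 35" by (rule blkTB2) (use assms c in auto)
  then show ?thesis unfolding c p by (rule reach_mono) (auto split: option.splits)
qed

lemma blkTB3_g:
  assumes "pc c = 96" "regs c 2 = 1" "regs c 17 = cc" "regs c 18 = sp" "regs c 20 = 0" "regs c 23 = x'" "regs c 24 = y'"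
  shows "reach w X c
    (\<lambda>c'. pc c' = 52 \<and> mem c' = (mem c)(sp := x', madd w sp 1 := y') \<and> outp c' = outp c \<and>
       regs c' 15 = madd w x' 0 \<and> regs c' 16 = madd w y' 0 \<and> regs c' 17 = msub w cc 1 \<and>
       regs c' 18 = madd w (madd w sp 1) 1 \<and>
       (\<forall>i. i \<noteq> 15 \<and> i \<noteq> 16 \<and> i \<noteq> 17 \<and> i \<noteq> 18 \<longrightarrow> regs c' i = regs c i)) 8"
proof -
  obtain p r m ou where c: "c = Config p r m ou" by (cases c)
  show ?thesis using assms blkTB3[of r cc sp x' y' w X m ou] unfolding c by simp
qed

lemma enc_Nil: "encode_points [] = []" by (simp add: encode_points_def)

lemma enc_len: "length (encode_points ps) = 2 * length ps"
  by (induction ps) (auto simp: encode_points_def)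

lemma enc_snoc: "encode_points (ps @ [(a, b)]) = encode_points ps @ [a, b]"
  by (simp add: encode_points_def)

lemma enc_nth: "i < length ps \<Longrightarrow> encode_points ps ! (2 * i) = fst (ps ! i) \<and> encode_points ps ! (2 * i + 1) = snd (ps ! i)"
proof (induction ps arbitrary: i)
  case Nil then show ?case by simp
next
  case (Cons p ps)
  show ?case
  proof (cases i)
    case 0 then show ?thesis by (cases p) (simp add: encode_points_def)
  next
    case (Suc i')
    then have "encode_points (p # ps) ! (2 * i) = encode_points ps ! (2 * i')"
      "encode_points (p # ps) ! (2 * i + 1) = encode_points ps ! (2 * i' + 1)"
      by (cases p; simp add: encode_points_def)+
    then show ?thesis using Cons Suc by simp
  qed
qed

locale L =
  fixes w :: nat and X :: "nat list" and k :: nat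
  assumes bnd: "4 * (length X + k + 2) * (length X + k + 2) \<le> 2^w"
begin

abbreviation "n \<equiv> length X"
abbreviation "Wd \<equiv> 2 * k + 3"
abbreviation "Sb \<equiv> Suc k * (2 * k + 3)"

definition TabA :: "nat \<Rightarrow> nat" where "TabA a = Tab X k (a div Wd) (a mod Wd)"
definition cmem :: "nat \<Rightarrow> nat \<Rightarrow> nat" where "cmem lim = (\<lambda>a. if a < lim then TabA a else 0)"

lemma big: "Sb + 3 * n + 4 * k + 8 < 2^w"
proof -
  have e1: "4 * (n + k + 2) * (n + k + 2) = 4*(n*n) + 8*(n*k) + 16*n + 4*(k*k) + 16*k + 16"
    by (simp add: algebra_simps)
  have e2: "Sb = 2*(k*k) + 5*k + 3" by (simp add: algebra_simps)
  have "Sb + 3 * n + 4 * k + 8 < 4 * (n + k + 2) * (n + k + 2)"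
    unfolding e1 e2 by linarith
  then show ?thesis using bnd by linarith
qed

lemma TabA_at: "r < Wd \<Longrightarrow> TabA (q * Wd + r) = Tab X k q r"
  by (simp add: TabA_def)

lemma row_le: "e \<le> k \<Longrightarrow> e * Wd + Wd \<le> Sb"
proof -
  assume "e \<le> k"
  then have "Suc e * Wd \<le> Suc k * Wd" by (intro mult_le_mono1) simp
  then show ?thesis by simp
qed

definition regconst :: "(nat \<Rightarrow> nat) \<Rightarrow> bool" where
  "regconst r \<longleftrightarrow> r 0 = k \<and> r 1 = n \<and> r 2 = 1 \<and> r 3 = Suc k \<and> r 4 = Wd \<and> r 14 = 2*k+2 \<and> r 20 = 0"

definition colinv :: "nat \<Rightarrow> nat \<Rightarrow> config \<Rightarrow> bool" where
  "colinv e j c \<longleftrightarrow> pc c = 16 \<and> 1 \<le> e \<and> e \<le> k \<and> 1 \<le> j \<and> j \<le> 2*k+1 \<and> regconst (regs c) \<and>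
     regs c 5 = e \<and> regs c 6 = j \<and> regs c 7 = e * Wd \<and> regs c 8 = (e - 1) * Wd \<and>
     mem c = cmem (e * Wd + j) \<and> outp c = []"

definition rowinv :: "nat \<Rightarrow> config \<Rightarrow> bool" where
  "rowinv e c \<longleftrightarrow> pc c = 6 \<and> e \<le> k \<and> regconst (regs c) \<and> regs c 5 = e \<and> regs c 7 = e * Wd \<and>
     mem c = cmem (Suc e * Wd) \<and> outp c = []"

lemma col_step:
  assumes inv: "colinv e j c"
  shows "reach w X c (\<lambda>c'. if j + 1 < 2*k+2 then colinv e (j+1) c' else rowinv e c') 34"
proof -
  define pb where "pb = (e - 1) * Wd"
  define cb where "cb = e * Wd"
  have I: "pc c = 16" "1 \<le> e" "e \<le> k" "1 \<le> j" "j \<le> 2*k+1" "regconst (regs c)"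
     "regs c 5 = e" "regs c 6 = j" "regs c 7 = cb" "regs c 8 = pb" "mem c = cmem (cb + j)" "outp c = []"
    using inv by (auto simp: colinv_def pb_def cb_def)
  have pbcb: "pb + Wd = cb" using I(2) by (cases e) (auto simp: pb_def cb_def)
  have cbS: "cb + Wd \<le> Sb" using row_le[OF I(3)] by (simp add: cb_def)
  note B = big
  have R: "regs c 1 = n" "regs c 2 = 1" "regs c 3 = Suc k" "regs c 14 = 2*k+2" "regs c 20 = 0"
    using I(6) by (auto simp: regconst_def)
  have m1: "madd w pb j = pb + j" using B pbcb cbS I by (intro madd_eq) linarith
  have m2: "madd w (pb + j) 1 = pb + j + 1" using B pbcb cbS I by (intro madd_eq) linarith
  have m3: "msub w (pb + j) 1 = pb + (j - 1)" using B pbcb cbS I by (subst msub_eq) linarith+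
  have m4: "madd w j 1 = j + 1" using B I by (intro madd_eq) linarith
  have m5: "madd w cb j = cb + j" using B cbS I by (intro madd_eq) linarith
  have pbq: "pb = (e - 1) * Wd" by (simp add: pb_def)
  have s: "cmem (cb + j) (pb + j) = Tab X k (e-1) j"
    using pbcb I by (simp add: cmem_def pbq TabA_at)
  have s1: "cmem (cb + j) (pb + j + 1) = Tab X k (e-1) (Suc j)"
    using pbcb I TabA_at[of "Suc j" "e-1"] by (simp add: cmem_def pbq add.assoc)
  have s0: "cmem (cb + j) (pb + (j - 1)) = Tab X k (e-1) (j - 1)"
    using pbcb I TabA_at[of "j - 1" "e-1"] by (simp add: cmem_def pbq)
  have tb: "Tab X k e' j' \<le> n + k + 1" if "e' \<le> k" for e' j'
    using Tab_bound[of X k e' j'] that by simp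
  have eq: "Tab X k e j = slide X (Suc k) j (candv (Suc k) j (Tab X k (e-1) j) (Tab X k (e-1) (Suc j)) (Tab X k (e-1) (j-1)))"
    using Tab_Suc[of j k X "e-1"] I by simp
  have val: "colres w X n (mem c) pb (Suc k) j = Tab X k e j"
    unfolding colres_def I(11) m1 m2 m3 s s1 s0 eq
  proof (rule colres_val[where B = "n + k + 2"])
    show "Tab X k (e - 1) j \<le> n + k + 2" "Tab X k (e - 1) (Suc j) \<le> n + k + 2" "Tab X k (e - 1) (j - 1) \<le> n + k + 2"
      using tb[of "e-1" j] tb[of "e-1" "Suc j"] tb[of "e-1" "j-1"] I(3) by linarith+
    show "n + k + 2 + 2 + j + n < 2 ^ w" using B I by linarith
    assume "0 < candv (Suc k) j (Tab X k (e - 1) j) (Tab X k (e - 1) (Suc j)) (Tab X k (e - 1) (j - 1))"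
    from cand_sound[OF Tab_sound I(4) refl this]
    show "Suc k \<le> candv (Suc k) j (Tab X k (e - 1) j) (Tab X k (e - 1) (Suc j)) (Tab X k (e - 1) (j - 1)) - 1 + j"
      by blast
  qed
  have memeq: "(cmem (cb + j))(cb + j := Tab X k e j) = cmem (cb + j + 1)"
    using TabA_at[of j e] I by (auto simp: cmem_def cb_def)
  have memrow: "cmem (cb + (2*k+2)) = cmem (Suc e * Wd)"
  proof
    fix a
    show "cmem (cb + (2*k+2)) a = cmem (Suc e * Wd) a"
    proof (cases "a = cb + (2*k+2)")
      case True
      then have "TabA a = Tab X k e (2*k+2)" using TabA_at[of "2*k+2" e] by (simp add: cb_def)
      then show ?thesis using True Tab_edge(2)[of X k e] by (simp add: cmem_def cb_def)
    next
      case False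
      then show ?thesis by (auto simp: cmem_def cb_def)
    qed
  qed
  show ?thesis
  proof (rule reach_mono[OF colraw[OF I(1) R(1,2,3) I(8,9,10) R(4,5)]])
    show "(7 + (7 + (5 + (10 + 5))) :: nat) \<le> 34" by simp
    fix c' assume h: "pc c' = (if madd w j 1 < 2 * k + 2 then 16 else 6) \<and>
         mem c' = (mem c)(madd w cb j := colres w X n (mem c) pb (Suc k) j) \<and>
         outp c' = outp c \<and> regs c' 6 = madd w j 1 \<and>
         (\<forall>i. i \<noteq> 6 \<and> i \<noteq> 10 \<and> i \<noteq> 11 \<and> i \<noteq> 12 \<and> i \<noteq> 13 \<longrightarrow> regs c' i = regs c i)"
    have rc: "regconst (regs c')" using h I(6) by (simp add: regconst_def)
    have mc: "mem c' = cmem (cb + j + 1)" using h val memeq m5 I(11) by simp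
    show "if j + 1 < 2*k+2 then colinv e (j+1) c' else rowinv e c'"
    proof (cases "j + 1 < 2*k+2")
      case True
      then show ?thesis using h rc mc I m4 by (simp add: colinv_def cb_def pb_def)
    next
      case False
      then have "j + 1 = 2*k+2" using I by simp
      then have "mem c' = cmem (Suc e * Wd)" using mc memrow by simp
      then show ?thesis using False h rc I m4 by (simp add: rowinv_def cb_def)
    qed
  qed
qed


lemma cols: "colinv e j c \<Longrightarrow> reach w X c (rowinv e) (34 * (2*k + 2 - j))"
proof (induction "2*k+1 - j" arbitrary: j c)
  case 0
  then have j: "j = 2*k+1" by (auto simp: colinv_def)
  have "reach w X c (\<lambda>c'. if j + 1 < 2*k+2 then colinv e (j+1) c' else rowinv e c') 34"
    by (rule col_step[OF 0(2)])
  then show ?case by (rule reach_mono) (use j in auto)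
next
  case (Suc d)
  then have j: "j + 1 < 2*k+2" "j \<le> 2*k+1" by (auto simp: colinv_def)
  have A: "reach w X c (colinv e (j+1)) 34"
    using col_step[OF Suc(3)] by (rule reach_mono) (use j in auto)
  have B: "reach w X c' (rowinv e) (34 * (2*k + 2 - (j+1)))" if "colinv e (j+1) c'" for c'
    using Suc(1)[of "j+1" c'] Suc(2) that by simp
  have "reach w X c (rowinv e) (34 + 34 * (2*k + 2 - (j+1)))" by (rule reach_trans[OF A B])
  moreover have "34 + 34 * (2*k + 2 - (j+1)) = 34 * (2*k + 2 - j)" using j by simp
  ultimately show ?case by simp
qed

definition foundinv :: "nat \<Rightarrow> config \<Rightarrow> bool" where
  "foundinv e c \<longleftrightarrow> pc c = 47 \<and> e \<le> k \<and> regconst (regs c) \<and> regs c 5 = e \<and>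
     mem c = cmem (Suc e * Wd) \<and> outp c = [] \<and> n < Tab X k e (Suc k)"

definition failinv :: "config \<Rightarrow> bool" where
  "failinv c \<longleftrightarrow> pc c = 11 \<and> outp c = [0]"

lemma row_step:
  assumes inv: "rowinv e c"
  shows "reach w X c (\<lambda>c'. if n < Tab X k e (Suc k) then foundinv e c'
     else if e < k then colinv (Suc e) 1 c' else failinv c') 10"
proof -
  define cb where "cb = e * Wd"
  have sw: "Suc e * Wd = cb + Wd" by (simp add: cb_def)
  have I: "pc c = 6" "e \<le> k" "regconst (regs c)" "regs c 5 = e" "regs c 7 = cb" "mem c = cmem (cb + Wd)" "outp c = []"
    using inv unfolding rowinv_def sw by (auto simp: cb_def)
  obtain p r m ou where c: "c = Config p r m ou" by (cases c)
  have R: "r 0 = k" "r 1 = n" "r 2 = 1" "r 3 = Suc k" "r 4 = Wd" "r 5 = e" "r 7 = cb" "r 20 = 0" "r 14 = 2*k+2"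
    and R2: "p = 6" "m = cmem (cb + Wd)" "ou = []"
    using I c by (auto simp: regconst_def)
  have cbS: "cb + Wd \<le> Sb" using row_le[OF I(2)] by (simp add: cb_def)
  note B = big
  have m1: "madd w cb (Suc k) = cb + Suc k" using B cbS by (intro madd_eq) linarith
  have m2: "madd w cb 0 = cb" using B cbS by (intro madd0) linarith
  have m3: "madd w cb Wd = cb + Wd" using B cbS by (intro madd_eq) linarith
  have m4: "madd w e 1 = e + 1" using B cbS I(2) by (intro madd_eq) linarith
  have m5: "madd w 1 0 = 1" using B by (intro madd0) linarith
  have tv: "m (madd w cb (Suc k)) = Tab X k e (Suc k)"
    unfolding m1 R2(2) using TabA_at[of "Suc k" e] by (simp add: cmem_def cb_def)
  have raw: "reach w X (Config 6 r m ou) (\<lambda>c'. mem c' = m \<and>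
      (if n < m (madd w cb (Suc k)) then pc c' = 47 \<and> outp c' = ou \<and> (\<forall>i. i \<noteq> 11 \<and> i \<noteq> 12 \<longrightarrow> regs c' i = r i)
       else if e < k then pc c' = 16 \<and> outp c' = ou \<and> regs c' 8 = madd w cb 0 \<and> regs c' 7 = madd w cb Wd
          \<and> regs c' 5 = madd w e 1 \<and> regs c' 6 = madd w 1 0
          \<and> (\<forall>i. i \<noteq> 11 \<and> i \<noteq> 12 \<and> i \<noteq> 5 \<and> i \<noteq> 6 \<and> i \<noteq> 7 \<and> i \<noteq> 8 \<longrightarrow> regs c' i = r i)
       else pc c' = 11 \<and> outp c' = ou @ [0])) 10"
    by (rule blkRow) (use R in auto)
  have memn: "cmem (cb + Wd) = cmem (Suc e * Wd + 1)"
  proof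
    fix a show "cmem (cb + Wd) a = cmem (Suc e * Wd + 1) a"
    proof (cases "a = Suc e * Wd")
      case True
      then have "TabA a = Tab X k (Suc e) 0" using TabA_at[of 0 "Suc e"] by simp
      then show ?thesis using True Tab_edge(1)[of X k "Suc e"] by (simp add: cmem_def cb_def)
    qed (auto simp: cmem_def cb_def)
  qed
  show ?thesis unfolding c R2(1)
  proof (rule reach_mono[OF raw order_refl])
    fix c' assume h: "mem c' = m \<and>
      (if n < m (madd w cb (Suc k)) then pc c' = 47 \<and> outp c' = ou \<and> (\<forall>i. i \<noteq> 11 \<and> i \<noteq> 12 \<longrightarrow> regs c' i = r i)
       else if e < k then pc c' = 16 \<and> outp c' = ou \<and> regs c' 8 = madd w cb 0 \<and> regs c' 7 = madd w cb Wd
          \<and> regs c' 5 = madd w e 1 \<and> regs c' 6 = madd w 1 0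
          \<and> (\<forall>i. i \<noteq> 11 \<and> i \<noteq> 12 \<and> i \<noteq> 5 \<and> i \<noteq> 6 \<and> i \<noteq> 7 \<and> i \<noteq> 8 \<longrightarrow> regs c' i = r i)
       else pc c' = 11 \<and> outp c' = ou @ [0])"
    show "if n < Tab X k e (Suc k) then foundinv e c'
     else if e < k then colinv (Suc e) 1 c' else failinv c'"
    proof (cases "n < Tab X k e (Suc k)")
      case True
      then show ?thesis using h tv R R2 I(2) unfolding foundinv_def sw by (simp add: regconst_def)
    next
      case F: False
      show ?thesis
      proof (cases "e < k")
        case True
        then show ?thesis using F h tv R R2 m2 m3 m4 m5 memn by (simp add: colinv_def regconst_def cb_def)
      next
        case False
        then show ?thesis using F h tv R R2 by (simp add: failinv_def)
      qed
    qed
  qed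
qed

definition TR :: nat where "TR = 10 + 34 * (2*k+1)"

lemma rows: "rowinv e c \<Longrightarrow> reach w X c (\<lambda>c'.
   (\<exists>e'. e \<le> e' \<and> foundinv e' c' \<and> (\<forall>e''. e \<le> e'' \<and> e'' < e' \<longrightarrow> \<not> n < Tab X k e'' (Suc k))) \<or>
   (failinv c' \<and> (\<forall>e''. e \<le> e'' \<and> e'' \<le> k \<longrightarrow> \<not> n < Tab X k e'' (Suc k)))) ((k + 1 - e) * TR)"
proof (induction "k - e" arbitrary: e c)
  case 0
  then have ek: "e = k" by (auto simp: rowinv_def)
  have "reach w X c (\<lambda>c'. if n < Tab X k e (Suc k) then foundinv e c'
     else if e < k then colinv (Suc e) 1 c' else failinv c') 10" by (rule row_step[OF 0(2)])
  then show ?case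
  proof (rule reach_mono)
    show "10 \<le> (k + 1 - e) * TR" using ek by (simp add: TR_def)
    fix c' assume "if n < Tab X k e (Suc k) then foundinv e c' else if e < k then colinv (Suc e) 1 c' else failinv c'"
    then show "(\<exists>e'. e \<le> e' \<and> foundinv e' c' \<and> (\<forall>e''. e \<le> e'' \<and> e'' < e' \<longrightarrow> \<not> n < Tab X k e'' (Suc k))) \<or>
      (failinv c' \<and> (\<forall>e''. e \<le> e'' \<and> e'' \<le> k \<longrightarrow> \<not> n < Tab X k e'' (Suc k)))"
    proof (cases "n < Tab X k e (Suc k)")
      case True
      then show ?thesis using \<open>if _ then _ else _\<close> by (intro disjI1 exI[of _ e]) auto
    next
      case False
      then show ?thesis using \<open>if _ then _ else _\<close> ek by auto
    qed
  qed
next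
  case (Suc d)
  then have ek: "e < k" by (auto simp: rowinv_def)
  have A: "reach w X c (\<lambda>c'. if n < Tab X k e (Suc k) then foundinv e c'
     else if e < k then colinv (Suc e) 1 c' else failinv c') 10" by (rule row_step[OF Suc(3)])
  define Q where "Q = (\<lambda>e c'.
   (\<exists>e'. e \<le> e' \<and> foundinv e' c' \<and> (\<forall>e''. e \<le> e'' \<and> e'' < e' \<longrightarrow> \<not> n < Tab X k e'' (Suc k))) \<or>
   (failinv c' \<and> (\<forall>e''. e \<le> e'' \<and> e'' \<le> k \<longrightarrow> \<not> n < Tab X k e'' (Suc k))))"
  have B: "reach w X c' (Q e) (34 * (2*k+1) + (k + 1 - Suc e) * TR)"
    if h: "if n < Tab X k e (Suc k) then foundinv e c' else if e < k then colinv (Suc e) 1 c' else failinv c'" for c'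
  proof (cases "n < Tab X k e (Suc k)")
    case True
    then have "Q e c'" using h unfolding Q_def by (intro disjI1 exI[of _ e]) auto
    then show ?thesis unfolding reach_def by (intro exI[of _ 0]) simp
  next
    case False
    then have ci: "colinv (Suc e) 1 c'" using h ek by simp
    have C1: "reach w X c' (rowinv (Suc e)) (34 * (2*k+2 - 1))" by (rule cols[OF ci])
    have C2: "reach w X c'' (Q (Suc e)) ((k + 1 - Suc e) * TR)" if "rowinv (Suc e) c''" for c''
      using Suc(1)[of "Suc e" c''] Suc(2) that by (simp add: Q_def)
    have "reach w X c' (Q (Suc e)) (34 * (2*k+2 - 1) + (k + 1 - Suc e) * TR)"
      by (rule reach_trans[OF C1 C2])
    then show ?thesis
    proof (rule reach_mono)
      show "34 * (2*k+2 - 1) + (k + 1 - Suc e) * TR \<le> 34 * (2*k+1) + (k + 1 - Suc e) * TR" by simp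
      fix c'' assume "Q (Suc e) c''"
      then show "Q e c''" unfolding Q_def
      proof (elim disjE exE conjE)
        fix e' assume a: "Suc e \<le> e'" "foundinv e' c''" "\<forall>e''. Suc e \<le> e'' \<and> e'' < e' \<longrightarrow> \<not> n < Tab X k e'' (Suc k)"
        have "\<forall>e''. e \<le> e'' \<and> e'' < e' \<longrightarrow> \<not> n < Tab X k e'' (Suc k)"
        proof (intro allI impI)
          fix e'' assume "e \<le> e'' \<and> e'' < e'"
          then show "\<not> n < Tab X k e'' (Suc k)" using a(3) False by (cases "e'' = e") auto
        qed
        then show "(\<exists>e'. e \<le> e' \<and> foundinv e' c'' \<and> (\<forall>e''. e \<le> e'' \<and> e'' < e' \<longrightarrow> \<not> n < Tab X k e'' (Suc k))) \<or>
          (failinv c'' \<and> (\<forall>e''. e \<le> e'' \<and> e'' \<le> k \<longrightarrow> \<not> n < Tab X k e'' (Suc k)))"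
          using a by (intro disjI1 exI[of _ e']) auto
      next
        assume a: "failinv c''" "\<forall>e''. Suc e \<le> e'' \<and> e'' \<le> k \<longrightarrow> \<not> n < Tab X k e'' (Suc k)"
        have "\<forall>e''. e \<le> e'' \<and> e'' \<le> k \<longrightarrow> \<not> n < Tab X k e'' (Suc k)"
        proof (intro allI impI)
          fix e'' assume "e \<le> e'' \<and> e'' \<le> k"
          then show "\<not> n < Tab X k e'' (Suc k)" using a(2) False by (cases "e'' = e") auto
        qed
        then show "(\<exists>e'. e \<le> e' \<and> foundinv e' c'' \<and> (\<forall>e''. e \<le> e'' \<and> e'' < e' \<longrightarrow> \<not> n < Tab X k e'' (Suc k))) \<or>
          (failinv c'' \<and> (\<forall>e''. e \<le> e'' \<and> e'' \<le> k \<longrightarrow> \<not> n < Tab X k e'' (Suc k)))"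
          using a by blast
      qed
    qed
  qed
  have "reach w X c (Q e) (10 + (34 * (2*k+1) + (k + 1 - Suc e) * TR))" by (rule reach_trans[OF A B])
  moreover have "10 + (34 * (2*k+1) + (k + 1 - Suc e) * TR) = (k + 1 - e) * TR"
  proof -
    have "k + 1 - e = Suc (k + 1 - Suc e)" using ek by simp
    then show ?thesis by (simp add: TR_def)
  qed
  ultimately show ?case by (simp add: Q_def)
qed


definition stk :: "(nat \<times> nat) list \<Rightarrow> nat list" where "stk S = encode_points (rev (Bpre X S))"

definition tmem :: "nat \<Rightarrow> nat list \<Rightarrow> nat \<Rightarrow> nat" where
  "tmem E st = (\<lambda>a. if a < Sb then cmem (Suc E * Wd) a else if a - Sb < length st then st ! (a - Sb) else 0)"

definition tbinv :: "nat \<Rightarrow> nat \<Rightarrow> nat \<Rightarrow> nat \<Rightarrow> (nat \<times> nat) list \<Rightarrow> config \<Rightarrow> bool" where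
  "tbinv E x y c S cfg \<longleftrightarrow> pc cfg = 52 \<and> E \<le> k \<and> regconst (regs cfg) \<and> regs cfg 19 = Sb \<and>
     regs cfg 18 = Sb + length (stk S) \<and> regs cfg 15 = x \<and> regs cfg 16 = y \<and> regs cfg 17 = c \<and>
     mem cfg = tmem E (stk S) \<and> outp cfg = [] \<and> TInv X E x y c S"

lemma stk_len: "TInv X E x y c S \<Longrightarrow> length (stk S) \<le> 2 * E"
  by (simp add: stk_def enc_len Bpre_len TInv_def)

lemma lk_iff:
  assumes c: "0 < c" "c \<le> E" "E \<le> k" and xy: "x' \<le> n" "y' \<le> n" "x' \<le> y' + Suc k" "y' \<le> x' + Suc k"
  shows "lk w (tmem E st) ((c - 1) * Wd) (Suc k) x' y' \<longleftrightarrow> R X (x', y') (c - 1)"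
proof -
  note B = big
  have rS: "c * Wd + Wd \<le> Sb" using row_le[of c] c by simp
  have cc: "(c - 1) * Wd + Wd = c * Wd" using c by (cases c) auto
  define j' where "j' = y' + Suc k - x'"
  have j'b: "j' \<le> 2*k+2" "Suc k \<le> x' + j'" "x' + j' - Suc k = y'" using xy by (auto simp: j'_def)
  have a1: "madd w y' (Suc k) = y' + Suc k" using B xy by (intro madd_eq) linarith
  have a2: "msub w (y' + Suc k) x' = j'" unfolding j'_def using B xy by (intro msub_eq) linarith+
  have a3: "madd w j' ((c - 1) * Wd) = (c - 1) * Wd + j'" using B j'b rS cc by (subst madd_eq) linarith+
  have lt: "(c - 1) * Wd + j' < Sb" "(c - 1) * Wd + j' < Suc E * Wd"
  proof -
    have f4: "c * Wd \<le> E * Wd" using c by simp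
    have f1: "Suc E * Wd = E * Wd + Wd" by simp
    have f2: "Sb = k * Wd + Wd" by simp
    have f3: "E * Wd \<le> k * Wd" using c by simp
    show "(c - 1) * Wd + j' < Sb" "(c - 1) * Wd + j' < Suc E * Wd"
      using j'b cc f1 f2 f3 f4 by linarith+
  qed
  have "tmem E st ((c - 1) * Wd + j') = Tab X k (c - 1) j'"
    using lt TabA_at[of j' "c - 1"] j'b by (simp add: tmem_def cmem_def)
  then have "lk w (tmem E st) ((c - 1) * Wd) (Suc k) x' y' \<longleftrightarrow> x' < Tab X k (c - 1) j'"
    unfolding lk_def a1 a2 a3 by simp
  also have "\<dots> \<longleftrightarrow> R X (x', x' + j' - Suc k) (c - 1)"
    using Tab_iff[of "c - 1" k x' j' X] c j'b by simp
  finally show ?thesis using j'b by simp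
qed

lemma tbsel_eq:
  assumes c: "0 < c" "c \<le> E" "E \<le> k" and xy: "x1 \<le> n" "y1 \<le> n" "x1 \<le> y1 + c" "y1 \<le> x1 + c"
  shows "tbsel w (tmem E st) (mmul w (msub w c 1) Wd) (Suc k) x1 y1 =
    (if 0 < x1 \<and> R X (x1 - 1, y1) (c - 1) then Some (x1 - 1, y1)
     else if 0 < y1 \<and> R X (x1, y1 - 1) (c - 1) then Some (x1, y1 - 1)
     else if 0 < x1 \<and> 0 < y1 \<and> x1 \<noteq> y1 \<and> R X (x1 - 1, y1 - 1) (c - 1) then Some (x1 - 1, y1 - 1) else None)"
proof -
  note B = big
  have rS: "c * Wd + Wd \<le> Sb" using row_le[of c] c by simp
  have cc: "(c - 1) * Wd + Wd = c * Wd" using c by (cases c) auto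
  have rb: "mmul w (msub w c 1) Wd = (c - 1) * Wd"
  proof -
    have "msub w c 1 = c - 1" using B c by (intro msub_eq) linarith+
    moreover have "(c - 1) * Wd < 2^w" using B rS cc by linarith
    ultimately show ?thesis by (simp add: mmul_eq)
  qed
  have e1: "0 < x1 \<Longrightarrow> msub w x1 1 = x1 - 1" using B xy by (intro msub_eq) linarith+
  have e2: "0 < y1 \<Longrightarrow> msub w y1 1 = y1 - 1" using B xy by (intro msub_eq) linarith+
  have e3: "madd w x1 0 = x1" "madd w y1 0 = y1" using B xy by (intro madd0; linarith)+
  have L1: "0 < x1 \<Longrightarrow> lk w (tmem E st) ((c - 1) * Wd) (Suc k) (x1 - 1) y1 \<longleftrightarrow> R X (x1 - 1, y1) (c - 1)"
    by (rule lk_iff) (use c xy in auto)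
  have L2: "0 < y1 \<Longrightarrow> lk w (tmem E st) ((c - 1) * Wd) (Suc k) x1 (y1 - 1) \<longleftrightarrow> R X (x1, y1 - 1) (c - 1)"
    by (rule lk_iff) (use c xy in auto)
  have L3: "0 < x1 \<Longrightarrow> 0 < y1 \<Longrightarrow> lk w (tmem E st) ((c - 1) * Wd) (Suc k) (x1 - 1) (y1 - 1) \<longleftrightarrow> R X (x1 - 1, y1 - 1) (c - 1)"
    by (rule lk_iff) (use c xy in auto)
  show ?thesis unfolding tbsel_def rb e3
    using e1 e2 L1 L2 L3 by (auto simp: linorder_neq_iff)
qed


lemma tb_body:
  assumes inv: "tbinv E x y c S cfg" and nz: "\<not> (x = 0 \<and> y = 0)"
  shows "reach w X cfg (\<lambda>c'. 0 < c \<and> (\<exists>x' y' S'. tbinv E x' y' (c - 1) S' c')) (9 + (35 + 8))"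
proof -
  note B = big
  have I: "pc cfg = 52" "E \<le> k" "regconst (regs cfg)" "regs cfg 19 = Sb" "regs cfg 18 = Sb + length (stk S)"
    "regs cfg 15 = x" "regs cfg 16 = y" "regs cfg 17 = c" "mem cfg = tmem E (stk S)" "outp cfg = []"
    "TInv X E x y c S" using inv by (auto simp: tbinv_def)
  have RC: "regs cfg 2 = 1" "regs cfg 3 = Suc k" "regs cfg 4 = Wd" "regs cfg 20 = 0"
    using I(3) by (auto simp: regconst_def)
  have xyn: "x \<le> n" "y \<le> n" "R X (x, y) c" using I(11) by (auto simp: TInv_def)
  have cE: "c \<le> E" using I(11) by (auto simp: TInv_def)
  define l where "l = (if x < y \<or> y < x then lcs X x y else 0)"
  define x1 where "x1 = x - l"
  define y1 where "y1 = y - l"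
  have lP: "x < y \<or> y < x \<Longrightarrow> l \<le> x \<and> l \<le> y \<and> (l < x \<longrightarrow> l < y \<longrightarrow> X ! (x - 1 - l) \<noteq> X ! (y - 1 - l))"
    using lcs_props[OF xyn(1,2) refl] by (auto simp: l_def)
  have x1m: "(if x < y \<or> y < x then msub w x (lcs X x y) else x) = x1"
    "(if x < y \<or> y < x then msub w y (lcs X x y) else y) = y1"
    using lP B xyn by (auto simp: x1_def y1_def l_def intro!: msub_eq; linarith)+
  obtain S1 where S1: "TInv X E x1 y1 c S1" "Bpre X S1 = Bpre X S"
  proof (cases "x < y \<or> y < x")
    case True
    from tinv_slide[OF I(11) refl] True show ?thesis using that by (auto simp: x1_def y1_def l_def)
  next
    case False
    then show ?thesis using that I(11) by (auto simp: x1_def y1_def l_def)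
  qed
  have x1n: "x1 \<le> n" "y1 \<le> n" "R X (x1, y1) c" using S1(1) by (auto simp: TInv_def)
  have d1: "x1 \<le> y1 + c" "y1 \<le> x1 + c" using R_dist[OF x1n(3)] by auto
  have nz1: "(x1, y1) \<noteq> (0, 0)"
  proof (cases "x < y \<or> y < x")
    case True then show ?thesis using lP[OF True] by (auto simp: x1_def y1_def)
  next
    case False then show ?thesis using nz by (auto simp: x1_def y1_def l_def)
  qed
  have mm: "0 < x1 \<Longrightarrow> 0 < y1 \<Longrightarrow> x1 \<noteq> y1 \<Longrightarrow> X ! (x1 - 1) \<noteq> X ! (y1 - 1)"
  proof -
    assume a: "0 < x1" "0 < y1" "x1 \<noteq> y1"
    then have xy: "x < y \<or> y < x" by (auto simp: x1_def y1_def l_def)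
    then show ?thesis using lP[OF xy] a by (auto simp: x1_def y1_def)
  qed
  have RP: "0 < c \<and> (0 < x1 \<and> R X (x1 - 1, y1) (c - 1) \<or> 0 < y1 \<and> R X (x1, y1 - 1) (c - 1) \<or>
     0 < x1 \<and> 0 < y1 \<and> x1 \<noteq> y1 \<and> R X (x1 - 1, y1 - 1) (c - 1))"
    using R_pred[OF x1n(3) nz1] mm by auto
  define p' where "p' = (if 0 < x1 \<and> R X (x1 - 1, y1) (c - 1) then (x1 - 1, y1)
     else if 0 < y1 \<and> R X (x1, y1 - 1) (c - 1) then (x1, y1 - 1) else (x1 - 1, y1 - 1))"
  have c0: "0 < c" using RP by simp
  have sel: "tbsel w (tmem E (stk S)) (mmul w (msub w c 1) Wd) (Suc k) x1 y1 = Some p'"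
    unfolding tbsel_eq[OF c0 cE I(2) x1n(1,2) d1] using RP by (cases "x1 = 0") (auto simp: p'_def)
  have pc': "(0 < x1 \<and> p' = (x1 - 1, y1)) \<or> (0 < y1 \<and> p' = (x1, y1 - 1)) \<or>
            (0 < x1 \<and> 0 < y1 \<and> x1 \<noteq> y1 \<and> X ! (x1 - 1) \<noteq> X ! (y1 - 1) \<and> p' = (x1 - 1, y1 - 1))"
    "R X p' (c - 1)" using RP mm by (cases "x1 = 0"; auto simp: p'_def)+
  have TE: "TInv X E (fst p') (snd p') (c - 1) (p' # S1) \<and> Bpre X (p' # S1) = p' # Bpre X S1"
    by (rule tinv_edit[OF S1(1) c0 pc'(2) pc'(1)])
  have stk': "stk (p' # S1) = stk S @ [fst p', snd p']"
    using TE S1(2) by (cases p') (simp add: stk_def enc_snoc)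
  have sl: "length (stk S) + 2 \<le> 2 * E" using stk_len[OF I(11)] c0 I(11)
    by (simp add: stk_def enc_len Bpre_len TInv_def)
  have p'n: "fst p' \<le> n" "snd p' \<le> n" using TE by (auto simp: TInv_def)
  define P1 where "P1 = (\<lambda>c1. pc c1 = 61 \<and> mem c1 = tmem E (stk S) \<and> outp c1 = [] \<and>
      regs c1 15 = x1 \<and> regs c1 16 = y1 \<and> (\<forall>i. i \<noteq> 15 \<and> i \<noteq> 16 \<and> i \<noteq> 21 \<longrightarrow> regs c1 i = regs cfg i))"
  define P2 where "P2 = (\<lambda>c2. pc c2 = 96 \<and> mem c2 = tmem E (stk S) \<and> outp c2 = [] \<and>
      regs c2 23 = fst p' \<and> regs c2 24 = snd p' \<and>
      (\<forall>i. i \<noteq> 15 \<and> i \<noteq> 16 \<and> i \<noteq> 21 \<and> i \<noteq> 22 \<and> i \<noteq> 23 \<and> i \<noteq> 24 \<and> i \<noteq> 25 \<longrightarrow> regs c2 i = regs cfg i))"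
  have T1: "reach w X cfg P1 9"
    using blkTB1_g[OF I(1) I(6) I(7) RC(4)] by (rule reach_mono) (use nz x1m I in \<open>auto simp: P1_def\<close>)
  have T2: "reach w X c1 P2 35" if h: "P1 c1" for c1
  proof -
    have h': "pc c1 = 61" "regs c1 2 = 1" "regs c1 3 = Suc k" "regs c1 4 = Wd" "regs c1 15 = x1" "regs c1 16 = y1"
      "regs c1 17 = c" "regs c1 20 = 0" using h RC I by (auto simp: P1_def)
    show ?thesis using blkTB2_g[OF h'] by (rule reach_mono) (use h sel in \<open>auto simp: P1_def P2_def\<close>)
  qed
  have T3: "reach w X c2 (\<lambda>c'. 0 < c \<and> (\<exists>x' y' S'. tbinv E x' y' (c - 1) S' c')) 8" if h: "P2 c2" for c2
  proof -
    define sp where "sp = Sb + length (stk S)"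
    have h': "pc c2 = 96" "regs c2 2 = 1" "regs c2 17 = c" "regs c2 18 = sp" "regs c2 20 = 0"
      "regs c2 23 = fst p'" "regs c2 24 = snd p'" using h RC I by (auto simp: P2_def sp_def)
    have a1: "madd w sp 1 = sp + 1" using B sl I(2) by (intro madd_eq) (simp add: sp_def; linarith)
    have a2: "madd w (sp + 1) 1 = sp + 2" using B sl I(2) by (subst madd_eq) (simp add: sp_def; linarith)+
    have a3: "madd w (fst p') 0 = fst p'" "madd w (snd p') 0 = snd p'" using B p'n by (intro madd0; linarith)+
    have a4: "msub w c 1 = c - 1" using B c0 cE I(2) by (intro msub_eq) linarith+
    have memq: "(tmem E (stk S))(sp := fst p', sp + 1 := snd p') = tmem E (stk (p' # S1))"
    proof
      fix a
      show "((tmem E (stk S))(sp := fst p', sp + 1 := snd p')) a = tmem E (stk (p' # S1)) a"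
        unfolding stk' by (auto simp: tmem_def sp_def nth_append)
    qed
    show ?thesis using blkTB3_g[OF h'] proof (rule reach_mono)
      show "8 \<le> (8::nat)" by simp
      fix c3 assume h3: "pc c3 = 52 \<and> mem c3 = (mem c2)(sp := fst p', madd w sp 1 := snd p') \<and> outp c3 = outp c2 \<and>
       regs c3 15 = madd w (fst p') 0 \<and> regs c3 16 = madd w (snd p') 0 \<and> regs c3 17 = msub w c 1 \<and>
       regs c3 18 = madd w (madd w sp 1) 1 \<and>
       (\<forall>i. i \<noteq> 15 \<and> i \<noteq> 16 \<and> i \<noteq> 17 \<and> i \<noteq> 18 \<longrightarrow> regs c3 i = regs c2 i)"
      have rc: "regconst (regs c3)" using h3 h I(3) by (simp add: regconst_def P2_def)
      have "tbinv E (fst p') (snd p') (c - 1) (p' # S1) c3"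
        unfolding tbinv_def using h3 h rc I TE a1 a2 a3 a4 memq stk'
        by (simp add: P2_def sp_def)
      then show "0 < c \<and> (\<exists>x' y' S'. tbinv E x' y' (c - 1) S' c3)" using c0 by blast
    qed
  qed
  show ?thesis by (rule reach_trans[OF T1 reach_trans[OF T2 T3]])
qed


definition tbpost :: "nat \<Rightarrow> config \<Rightarrow> bool" where
  "tbpost E cfg \<longleftrightarrow> (\<exists>c0 S. pc cfg = 104 \<and> regconst (regs cfg) \<and> regs cfg 19 = Sb \<and>
     regs cfg 18 = Sb + length (stk S) \<and> mem cfg = tmem E (stk S) \<and> outp cfg = [] \<and> TInv X E 0 0 c0 S)"

lemma tb_loop: "tbinv E x y c S cfg \<Longrightarrow> reach w X cfg (tbpost E) ((c + 1) * 52)"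
proof (induction c arbitrary: x y S cfg)
  case 0
  have I: "pc cfg = 52" "regs cfg 15 = x" "regs cfg 16 = y" "regconst (regs cfg)" "TInv X E x y 0 S"
    using 0 by (auto simp: tbinv_def)
  have "R X (x, y) 0" using I(5) by (simp add: TInv_def)
  then have xy: "x = 0" "y = 0" using R_zero by auto
  have r20: "regs cfg 20 = 0" using I(4) by (simp add: regconst_def)
  show ?case using blkTB1_g[OF I(1-3) r20]
  proof (rule reach_mono)
    show "9 \<le> (0 + 1) * (52::nat)" by simp
    fix c' assume h: "mem c' = mem cfg \<and> outp c' = outp cfg \<and>
      (if 0 < x \<or> 0 < y then pc c' = 61 \<and>
          regs c' 15 = (if x < y \<or> y < x then msub w x (lcs X x y) else x) \<and>
          regs c' 16 = (if x < y \<or> y < x then msub w y (lcs X x y) else y) \<and>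
          (\<forall>i. i \<noteq> 15 \<and> i \<noteq> 16 \<and> i \<noteq> 21 \<longrightarrow> regs c' i = regs cfg i)
       else pc c' = 104 \<and> regs c' = regs cfg)"
    then show "tbpost E c'" using 0 xy unfolding tbpost_def tbinv_def by auto
  qed
next
  case (Suc c)
  show ?case
  proof (cases "x = 0 \<and> y = 0")
    case True
    have I: "pc cfg = 52" "regs cfg 15 = x" "regs cfg 16 = y" "regconst (regs cfg)"
      using Suc.prems by (auto simp: tbinv_def)
    have r20: "regs cfg 20 = 0" using I(4) by (simp add: regconst_def)
    show ?thesis using blkTB1_g[OF I(1-3) r20]
    proof (rule reach_mono)
      show "9 \<le> (Suc c + 1) * (52::nat)" by simp
      fix c' assume h: "mem c' = mem cfg \<and> outp c' = outp cfg \<and>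
        (if 0 < x \<or> 0 < y then pc c' = 61 \<and>
            regs c' 15 = (if x < y \<or> y < x then msub w x (lcs X x y) else x) \<and>
            regs c' 16 = (if x < y \<or> y < x then msub w y (lcs X x y) else y) \<and>
            (\<forall>i. i \<noteq> 15 \<and> i \<noteq> 16 \<and> i \<noteq> 21 \<longrightarrow> regs c' i = regs cfg i)
         else pc c' = 104 \<and> regs c' = regs cfg)"
      then show "tbpost E c'" using Suc.prems True unfolding tbpost_def tbinv_def by auto
    qed
  next
    case False
    have A: "reach w X cfg (\<lambda>c'. 0 < Suc c \<and> (\<exists>x' y' S'. tbinv E x' y' (Suc c - 1) S' c')) (9 + (35 + 8))"
      by (rule tb_body[OF Suc.prems False])
    have B: "reach w X c' (tbpost E) ((c + 1) * 52)" if "0 < Suc c \<and> (\<exists>x' y' S'. tbinv E x' y' (Suc c - 1) S' c')" for c'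
      using that Suc.IH by auto
    have "reach w X cfg (tbpost E) (9 + (35 + 8) + (c + 1) * 52)" by (rule reach_trans[OF A B])
    then show ?thesis by simp
  qed
qed

definition popinv :: "nat \<Rightarrow> (nat \<times> nat) list \<Rightarrow> nat \<Rightarrow> config \<Rightarrow> bool" where
  "popinv E B i cfg \<longleftrightarrow> pc cfg = 105 \<and> regs cfg 1 = n \<and> regs cfg 2 = 1 \<and> regs cfg 19 = Sb \<and>
     regs cfg 18 = Sb + 2 * i \<and> mem cfg = tmem E (encode_points (rev B)) \<and> i \<le> length B \<and>
     length B \<le> k \<and> outp cfg = 1 # encode_points (take (length B - i) B)"

lemma pop_loop: "popinv E B i cfg \<Longrightarrow>
   reach w X cfg (\<lambda>c'. pc c' = 108 \<and> outp c' = 1 # encode_points (B @ [(n, n)])) (10 * (i + 1))"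
proof (induction i arbitrary: cfg)
  case 0
  have I: "pc cfg = 105" "regs cfg 1 = n" "regs cfg 2 = 1" "regs cfg 18 = Sb" "regs cfg 19 = Sb"
    "outp cfg = 1 # encode_points B" using 0 by (auto simp: popinv_def)
  obtain p r m ou where c: "cfg = Config p r m ou" by (cases cfg)
  have "reach w X (Config 105 r m ou) (\<lambda>c'. mem c' = m \<and>
       (if Sb < Sb then pc c' = 105 \<and> regs c' 18 = msub w (msub w Sb 1) 1 \<and>
          outp c' = ou @ [m (msub w (msub w Sb 1) 1), m (madd w (msub w (msub w Sb 1) 1) 1)] \<and>
          (\<forall>i. i \<noteq> 18 \<and> i \<noteq> 25 \<and> i \<noteq> 26 \<longrightarrow> regs c' i = r i)
        else pc c' = 108 \<and> outp c' = ou @ [n, n])) 10"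
    by (rule blkPop) (use I c in auto)
  moreover have p: "p = 105" using I c by simp
  ultimately show ?case unfolding c p
    by (elim reach_mono) (use I c in \<open>auto simp: encode_points_def\<close>)
next
  case (Suc i)
  note B0 = big
  have I: "pc cfg = 105" "regs cfg 1 = n" "regs cfg 2 = 1" "regs cfg 18 = Sb + 2 * Suc i" "regs cfg 19 = Sb"
    "mem cfg = tmem E (encode_points (rev B))" "Suc i \<le> length B" "length B \<le> k"
    "outp cfg = 1 # encode_points (take (length B - Suc i) B)" using Suc.prems by (auto simp: popinv_def)
  obtain p r m ou where c: "cfg = Config p r m ou" by (cases cfg)
  define sp where "sp = Sb + 2 * Suc i"
  have s1a: "1 \<le> sp" by (simp add: sp_def)
  have s1b: "sp < 2^w"
  proof -
    have "sp = Sb + 2 * i + 2" by (simp add: sp_def)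
    moreover have "i + 1 \<le> k" using I(7,8) by simp
    ultimately show ?thesis using B0 by linarith
  qed
  note s1 = s1a s1b
  have b1: "msub w sp 1 = sp - 1" by (rule msub_eq[OF s1])
  have s2a: "1 \<le> sp - 1" by (simp add: sp_def)
  have s2b: "sp - 1 < 2^w" using s1b by linarith
  note s2 = s2a s2b
  have b2: "msub w (sp - 1) 1 = sp - 1 - 1" by (rule msub_eq[OF s2])
  have a1: "msub w (msub w sp 1) 1 = Sb + 2 * i" unfolding b1 b2 by (simp add: sp_def)
  have a2: "madd w (Sb + 2 * i) 1 = Sb + 2 * i + 1" using B0 I(7,8) by (intro madd_eq) linarith
  have il: "i < length (rev B)" using I(7) by simp
  have rv: "rev B ! i = B ! (length B - Suc i)" using I(7) by (simp add: rev_nth)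
  have m1: "m (Sb + 2 * i) = fst (B ! (length B - Suc i))" "m (Sb + 2 * i + 1) = snd (B ! (length B - Suc i))"
  proof -
    have lt: "2 * i < length (encode_points (rev B))" "2 * i + 1 < length (encode_points (rev B))"
      using il by (simp_all add: enc_len)
    have "tmem E (encode_points (rev B)) (Sb + 2 * i) = encode_points (rev B) ! (2 * i)"
      "tmem E (encode_points (rev B)) (Sb + 2 * i + 1) = encode_points (rev B) ! (2 * i + 1)"
      using lt unfolding tmem_def by simp_all
    then show "m (Sb + 2 * i) = fst (B ! (length B - Suc i))" "m (Sb + 2 * i + 1) = snd (B ! (length B - Suc i))"
      using I(6) c enc_nth[OF il] rv by simp_all
  qed
  have tk: "take (length B - i) B = take (length B - Suc i) B @ [B ! (length B - Suc i)]"
  proof -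
    have "length B - i = Suc (length B - Suc i)" using I(7) by simp
    then show ?thesis using I(7) by (simp add: take_Suc_conv_app_nth)
  qed
  have raw: "reach w X (Config 105 r m ou) (\<lambda>c'. mem c' = m \<and>
       (if Sb < sp then pc c' = 105 \<and> regs c' 18 = msub w (msub w sp 1) 1 \<and>
          outp c' = ou @ [m (msub w (msub w sp 1) 1), m (madd w (msub w (msub w sp 1) 1) 1)] \<and>
          (\<forall>i. i \<noteq> 18 \<and> i \<noteq> 25 \<and> i \<noteq> 26 \<longrightarrow> regs c' i = r i)
        else pc c' = 108 \<and> outp c' = ou @ [n, n])) 10"
    by (rule blkPop) (use I c in \<open>auto simp: sp_def\<close>)
  have p: "p = 105" using I c by simp
  have A: "reach w X cfg (popinv E B i) 10" unfolding c p
  proof (rule reach_mono[OF raw order_refl])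
    fix c' assume h: "mem c' = m \<and>
       (if Sb < sp then pc c' = 105 \<and> regs c' 18 = msub w (msub w sp 1) 1 \<and>
          outp c' = ou @ [m (msub w (msub w sp 1) 1), m (madd w (msub w (msub w sp 1) 1) 1)] \<and>
          (\<forall>i. i \<noteq> 18 \<and> i \<noteq> 25 \<and> i \<noteq> 26 \<longrightarrow> regs c' i = r i)
        else pc c' = 108 \<and> outp c' = ou @ [n, n])"
    have "Sb < sp" by (simp add: sp_def)
    then show "popinv E B i c'" using h I c a1 a2 m1 tk
      by (cases "B ! (length B - Suc i)") (auto simp: popinv_def enc_snoc)
  qed
  have "reach w X cfg (\<lambda>c'. pc c' = 108 \<and> outp c' = 1 # encode_points (B @ [(n, n)])) (10 + 10 * (i + 1))"
    by (rule reach_trans[OF A Suc.IH])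
  then show ?case by simp
qed


lemma init_ok: "0 < w \<Longrightarrow> reach w X (init_config k) (rowinv 0) 8"
proof -
  assume w: "0 < w"
  note B = big
  have a1: "madd w k 1 = Suc k" using B by (subst madd_eq) linarith+
  have a2: "madd w (Suc k) (Suc k) = 2*k+2" using B by (subst madd_eq) linarith+
  have a3: "madd w (2*k+2) 1 = Wd" using B by (subst madd_eq) linarith+
  have mm: "(\<lambda>_. 0)(Suc k := 1) = cmem (Suc 0 * Wd)"
  proof
    fix a show "((\<lambda>_. 0)(Suc k := 1)) a = cmem (Suc 0 * Wd) a"
      by (auto simp: cmem_def TabA_def)
  qed
  show ?thesis using blkInit[OF w, of X k]
  proof (rule reach_mono)
    show "8 \<le> (8::nat)" by simp
    fix c' assume h: "pc c' = 6 \<and> mem c' = (\<lambda>_. 0)(madd w k 1 := 1) \<and> outp c' = [] \<and>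
       regs c' 0 = k \<and> regs c' 1 = length X \<and> regs c' 2 = 1 \<and> regs c' 3 = madd w k 1 \<and>
       regs c' 14 = madd w (madd w k 1) (madd w k 1) \<and>
       regs c' 4 = madd w (madd w (madd w k 1) (madd w k 1)) 1 \<and>
       (\<forall>i. i \<noteq> 0 \<and> i \<noteq> 1 \<and> i \<noteq> 2 \<and> i \<noteq> 3 \<and> i \<noteq> 4 \<and> i \<noteq> 14 \<longrightarrow> regs c' i = 0)"
    then show "rowinv 0 c'" unfolding rowinv_def regconst_def a1 a2 a3 mm by simp
  qed
qed

lemma found_ok:
  assumes f: "foundinv e c"
  shows "reach w X c (\<lambda>c'. tbinv e n n e [(n, n)] c') 5"
proof -
  note B = big
  have I: "pc c = 47" "e \<le> k" "regconst (regs c)" "regs c 5 = e" "mem c = cmem (Suc e * Wd)" "outp c = []"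
    "n < Tab X k e (Suc k)" using f by (auto simp: foundinv_def)
  obtain p r m ou where c: "c = Config p r m ou" by (cases c)
  have R: "p = 47" "r 1 = n" "r 3 = Suc k" "r 4 = Wd" "r 5 = e" "r 20 = 0" "m = cmem (Suc e * Wd)" "ou = []"
    using I c by (auto simp: regconst_def)
  have raw: "reach w X (Config 47 r m ou)
    (\<lambda>c'. pc c' = 52 \<and> mem c' = m \<and> outp c' = ou \<and> regs c' 15 = madd w n 0 \<and> regs c' 16 = madd w n 0
       \<and> regs c' 17 = madd w e 0 \<and> regs c' 19 = mmul w (Suc k) Wd \<and> regs c' 18 = madd w (mmul w (Suc k) Wd) 0
       \<and> (\<forall>i. i \<noteq> 15 \<and> i \<noteq> 16 \<and> i \<noteq> 17 \<and> i \<noteq> 18 \<and> i \<noteq> 19 \<longrightarrow> regs c' i = r i)) 5"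
    by (rule blkFound) (use R in auto)
  have a1: "madd w n 0 = n" "madd w e 0 = e" using B I(2) by (intro madd0; linarith)+
  have a2: "mmul w (Suc k) Wd = Sb" using B by (subst mmul_eq) linarith+
  have a3: "madd w Sb 0 = Sb" using B by (intro madd0) linarith
  have mq: "cmem (Suc e * Wd) = tmem e []"
  proof
    fix a
    have h: "Suc e * Wd \<le> Sb" using row_le[OF I(2)] by simp
    show "cmem (Suc e * Wd) a = tmem e [] a"
    proof (cases "a < Sb")
      case True then show ?thesis by (simp add: tmem_def)
    next
      case False
      then have "\<not> a < Suc e * Wd" using h by linarith
      then show ?thesis using False unfolding tmem_def cmem_def by simp
    qed
  qed
  have Rn: "R X (n, n) e"
    using Tab_iff[where c=e and k=k and x=n and j="Suc k" and X=X] I(2,7) by simp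
  have TI: "TInv X e n n e [(n, n)]" using Rn by (simp add: TInv_def)
  have st: "stk [(n, n)] = []" by (simp add: stk_def encode_points_def)
  show ?thesis unfolding c R(1)
  proof (rule reach_mono[OF raw order_refl])
    fix c' assume h: "pc c' = 52 \<and> mem c' = m \<and> outp c' = ou \<and> regs c' 15 = madd w n 0 \<and> regs c' 16 = madd w n 0
       \<and> regs c' 17 = madd w e 0 \<and> regs c' 19 = mmul w (Suc k) Wd \<and> regs c' 18 = madd w (mmul w (Suc k) Wd) 0
       \<and> (\<forall>i. i \<noteq> 15 \<and> i \<noteq> 16 \<and> i \<noteq> 17 \<and> i \<noteq> 18 \<and> i \<noteq> 19 \<longrightarrow> regs c' i = r i)"
    have rc: "regconst (regs c')" using h I(3) c by (simp add: regconst_def)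
    show "tbinv e n n e [(n, n)] c'" unfolding tbinv_def st
      using h rc I(2) TI R(7,8) mq a1 a2 a3 by simp
  qed
qed

lemma out_ok:
  assumes t: "tbpost E cfg" and E: "E \<le> k"
  shows "reach w X cfg (\<lambda>c'. \<exists>c0 S. pc c' = 108 \<and> TInv X E 0 0 c0 S \<and>
      outp c' = 1 # encode_points (Bpre X S @ [(n, n)])) (2 + 10 * (k + 1))"
proof -
  obtain c0 S where I: "pc cfg = 104" "regconst (regs cfg)" "regs cfg 19 = Sb"
     "regs cfg 18 = Sb + length (stk S)" "mem cfg = tmem E (stk S)" "outp cfg = []" "TInv X E 0 0 c0 S"
    using t by (auto simp: tbpost_def)
  define B where "B = Bpre X S"
  have lB: "length B \<le> k" using I(7) E by (simp add: B_def Bpre_len TInv_def)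
  obtain p r m ou where c: "cfg = Config p r m ou" by (cases cfg)
  have R: "p = 104" "r 2 = 1" using I c by (auto simp: regconst_def)
  have raw: "reach w X (Config 104 r m ou) (\<lambda>c'. pc c' = 105 \<and> mem c' = m \<and> outp c' = ou @ [1] \<and> regs c' = r) 2"
    by (rule blkOut) (rule R(2))
  have A: "reach w X cfg (popinv E B (length B)) 2" unfolding c R(1)
  proof (rule reach_mono[OF raw order_refl])
    fix c' assume h: "pc c' = 105 \<and> mem c' = m \<and> outp c' = ou @ [1] \<and> regs c' = r"
    show "popinv E B (length B) c'" using h I c lB
      by (simp add: popinv_def regconst_def B_def stk_def enc_len enc_Nil)
  qed
  have Bq: "reach w X c' (\<lambda>c'. pc c' = 108 \<and> outp c' = 1 # encode_points (B @ [(n, n)])) (10 * (length B + 1))"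
    if "popinv E B (length B) c'" for c' by (rule pop_loop[OF that])
  have "reach w X cfg (\<lambda>c'. pc c' = 108 \<and> outp c' = 1 # encode_points (B @ [(n, n)])) (2 + 10 * (length B + 1))"
    by (rule reach_trans[OF A Bq])
  then show ?thesis
  proof (rule reach_mono)
    show "2 + 10 * (length B + 1) \<le> 2 + 10 * (k + 1)" using lB by simp
    fix c' assume "pc c' = 108 \<and> outp c' = 1 # encode_points (B @ [(n, n)])"
    then show "\<exists>c0 S. pc c' = 108 \<and> TInv X E 0 0 c0 S \<and> outp c' = 1 # encode_points (Bpre X S @ [(n, n)])"
      using I(7) by (auto simp: B_def)
  qed
qed


lemma sem_found:
  assumes e: "e \<le> k" "\<forall>e''. 0 \<le> e'' \<and> e'' < e \<longrightarrow> \<not> n < Tab X k e'' (Suc k)" and T: "TInv X e 0 0 c0 S"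
  shows "selfed X \<le> k \<and> optimal_self_alignment X S \<and> breakpoints X S = Bpre X S @ [(n, n)]"
proof -
  have F: "self_alignment X S" "align_cost X S \<le> e" "breakpoints X S = Bpre X S @ [(n, n)]"
    using tinv_final[OF T] by auto
  have le: "selfed X \<le> align_cost X S" by (rule selfed_le[OF F(1)])
  have ge: "e \<le> selfed X"
  proof (rule ccontr)
    assume "\<not> e \<le> selfed X"
    then have lt: "selfed X < e" by simp
    have "n < Tab X k (selfed X) (n + Suc k - n)"
      using Tab_complete[OF selfed_R[of X]] lt e(1) by simp
    then show False using e(2) lt by simp
  qed
  show ?thesis using F le ge e(1) by (simp add: optimal_self_alignment_def)
qed

lemma sem_fail:
  assumes "\<forall>e''. 0 \<le> e'' \<and> e'' \<le> k \<longrightarrow> \<not> n < Tab X k e'' (Suc k)"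
  shows "\<not> selfed X \<le> k"
proof
  assume a: "selfed X \<le> k"
  have "n < Tab X k (selfed X) (n + Suc k - n)"
    using Tab_complete[OF selfed_R[of X]] a by simp
  then show False using assms a by simp
qed

definition Fpost :: "config \<Rightarrow> bool" where
  "Fpost c' \<longleftrightarrow> halted prog c' \<and> (if selfed X \<le> k
           then (\<exists>A. optimal_self_alignment X A \<and> outp c' = 1 # encode_points (breakpoints X A))
           else outp c' = [0])"

lemma main: "0 < w \<Longrightarrow> reach w X (init_config k) Fpost (8 + ((k + 1) * TR + (5 + ((k + 1) * 52 + (2 + 10 * (k + 1))))))"
proof -
  assume w: "0 < w"
  define Qr where "Qr = (\<lambda>c'.
   (\<exists>e'. 0 \<le> e' \<and> foundinv e' c' \<and> (\<forall>e''. 0 \<le> e'' \<and> e'' < e' \<longrightarrow> \<not> n < Tab X k e'' (Suc k))) \<or>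
   (failinv c' \<and> (\<forall>e''. 0 \<le> e'' \<and> e'' \<le> k \<longrightarrow> \<not> n < Tab X k e'' (Suc k))))"
  have A: "reach w X (init_config k) (rowinv 0) 8" by (rule init_ok[OF w])
  have B: "reach w X c Qr ((k + 1) * TR)" if "rowinv 0 c" for c
    using rows[OF that] by (simp add: Qr_def)
  have C: "reach w X c Fpost (5 + ((k + 1) * 52 + (2 + 10 * (k + 1))))" if h: "Qr c" for c
  proof -
    from h show ?thesis unfolding Qr_def
    proof (elim disjE exE conjE)
      fix e' assume f: "foundinv e' c" and mn: "\<forall>e''. 0 \<le> e'' \<and> e'' < e' \<longrightarrow> \<not> n < Tab X k e'' (Suc k)"
      have ek: "e' \<le> k" using f by (simp add: foundinv_def)
      have C1: "reach w X c (tbinv e' n n e' [(n, n)]) 5" by (rule found_ok[OF f])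
      have C2: "reach w X c1 (tbpost e') ((k + 1) * 52)" if "tbinv e' n n e' [(n, n)] c1" for c1
        using tb_loop[OF that] by (rule reach_mono) (use ek in auto)
      have C3: "reach w X c2 Fpost (2 + 10 * (k + 1))" if "tbpost e' c2" for c2
        using out_ok[OF that ek]
      proof (rule reach_mono)
        show "2 + 10 * (k + 1) \<le> 2 + 10 * (k + 1)" by simp
        fix c' assume "\<exists>c0 S. pc c' = 108 \<and> TInv X e' 0 0 c0 S \<and> outp c' = 1 # encode_points (Bpre X S @ [(n, n)])"
        then obtain c0 S where h: "pc c' = 108" "TInv X e' 0 0 c0 S" "outp c' = 1 # encode_points (Bpre X S @ [(n, n)])"
          by blast
        have sf: "selfed X \<le> k \<and> optimal_self_alignment X S \<and> breakpoints X S = Bpre X S @ [(n, n)]"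
          by (rule sem_found[OF ek mn h(2)])
        have hl: "halted prog c'" using h(1) by (simp add: halted_def)
        show "Fpost c'" unfolding Fpost_def using sf hl h(3) by auto
      qed
      show ?thesis by (rule reach_trans[OF C1 reach_trans[OF C2 C3]])
    next
      assume f: "failinv c" and mn: "\<forall>e''. 0 \<le> e'' \<and> e'' \<le> k \<longrightarrow> \<not> n < Tab X k e'' (Suc k)"
      have "Fpost c" using f sem_fail[OF mn] unfolding Fpost_def failinv_def halted_def by simp
      then show ?thesis unfolding reach_def by (intro exI[of _ 0]) simp
    qed
  qed
  show ?thesis by (rule reach_trans[OF A reach_trans[OF B C]])
qed

end

theorem lemma4p5:
  "\<exists>(P :: instr list) (c :: nat) (d :: nat).
     \<forall>(w :: nat) (X :: nat list) (k :: nat).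
       (length X + k + 2) ^ d \<le> 2 ^ w \<and> (\<forall>a \<in> set X. a < 2 ^ w) \<longrightarrow>
       (\<exists>t \<le> c * (k + 1) ^ 2.
          halted P (run P w X k t) \<and>
          (if selfed X \<le> k
           then (\<exists>A. optimal_self_alignment X A \<and>
                     outp (run P w X k t) = 1 # encode_points (breakpoints X A))
           else outp (run P w X k t) = [0]))"
proof (rule exI[of _ prog], rule exI[of _ 200], rule exI[of _ 4], intro allI impI)
  fix w :: nat and X :: "nat list" and k :: nat
  assume H: "(length X + k + 2) ^ 4 \<le> 2 ^ w \<and> (\<forall>a \<in> set X. a < 2 ^ w)"
  define N where "N = length X + k + 2"
  have N2: "2 \<le> N" by (simp add: N_def)
  have "4 \<le> N * N" using mult_le_mono[OF N2 N2] by simp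
  then have "4 * (N * N) \<le> (N * N) * (N * N)" by simp
  also have "(N * N) * (N * N) = N ^ 4" by (simp add: power4_eq_xxxx)
  also have "\<dots> \<le> 2 ^ w" using H by (simp add: N_def)
  finally have b0: "4 * (N * N) \<le> 2 ^ w" .
  have bnd: "4 * (length X + k + 2) * (length X + k + 2) \<le> 2 ^ w"
    using b0 unfolding N_def by (simp only: mult.assoc)
  interpret L w X k by (unfold_locales) (rule bnd)
  have w: "0 < w"
  proof (rule ccontr)
    assume "\<not> 0 < w"
    then have "w = 0" by simp
    then show False using bnd by simp
  qed
  have M: "reach w X (init_config k) Fpost (8 + ((k + 1) * TR + (5 + ((k + 1) * 52 + (2 + 10 * (k + 1))))))"
    by (rule main[OF w])
  have Tb: "8 + ((k + 1) * TR + (5 + ((k + 1) * 52 + (2 + 10 * (k + 1))))) \<le> 200 * (k + 1) ^ 2"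
  proof -
    have "8 + ((k + 1) * TR + (5 + ((k + 1) * 52 + (2 + 10 * (k + 1))))) = 15 + (k + 1) * (68 * k + 106)"
      by (simp add: TR_def algebra_simps)
    also have "\<dots> \<le> 15 * (k + 1) * (k + 1) + (k + 1) * (106 * (k + 1))"
    proof -
      have "15 \<le> 15 * (k + 1) * (k + 1)" by simp
      moreover have "(k + 1) * (68 * k + 106) \<le> (k + 1) * (106 * (k + 1))" by (rule mult_le_mono2) simp
      ultimately show ?thesis by linarith
    qed
    also have "\<dots> \<le> 200 * (k + 1) ^ 2" by (simp add: power2_eq_square algebra_simps)
    finally show ?thesis .
  qed
  from M obtain t where t: "t \<le> 8 + ((k + 1) * TR + (5 + ((k + 1) * 52 + (2 + 10 * (k + 1)))))"
    "Fpost ((step prog w X ^^ t) (init_config k))" unfolding reach_def by blast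
  show "\<exists>t \<le> 200 * (k + 1) ^ 2.
          halted prog (run prog w X k t) \<and>
          (if selfed X \<le> k
           then (\<exists>A. optimal_self_alignment X A \<and>
                     outp (run prog w X k t) = 1 # encode_points (breakpoints X A))
           else outp (run prog w X k t) = [0])"
    using t Tb unfolding run_def Fpost_def by (intro exI[of _ t]) auto
qed


end
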